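(* Assume (A1)–(A4) below and $a<0$. Let $u_0\in H^2(\mathbb{R}_+)$ with $u_0(0)=0$. For $\Delta t\in(0,1]$ let $u^{\rm app}$, $\varepsilon_{j,n}$ and $\eta_{j,n}$ be as defined below. Then there exists $C>0$, independent of $u_0$ and $\Delta t\in(0,1]$, such that $$\sup_{n\ge2k}\sum_{j\ge r}\Delta x|\varepsilon_{j,n}|^2\le C\,\Delta t^2\|u_0''\|^2_{L^2(\mathbb{R}^+)},$$ $$\sup_{k\le n\le 2k-1}\sum_{j\ge r}\Delta x|\varepsilon_{j,n}|^2\le C\,\Delta t\,\|u_0'\|^2_{H^1(\mathbb{R}^+)},$$ $$\sum_{n\ge k}\sum_{j=0}^{r-1}\Delta t|\eta_{j,n}|^2\le C\,\Delta t^2\|u_0'\|^2_{L^2(\mathbb{R}^+)}.$$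
   Context: Fix the following data: - a real number $a\neq0$; - nonnegative integers $p,r$ and real coefficients $a_{-r},\dots,a_p$ with $a_{-r}\neq0$ and $a_p\neq0$; - an integer $k\ge1$ and real coefficients $\alpha_0,\dots,\alpha_k$, $\beta_0,\dots,\beta_{k-1}$ with $\alpha_k=1$ and $|\alpha_0|+|\beta_0|>0$; - a fixed ratio $\lambda>0$. For $\Delta t\in(0,1]$ set $\Delta x=\Delta t/\lambda$, $x_j=j\Delta x$ and $t^n=n\Delta t$. Let $\mathcal A(z)=\sum_{\ell=-r}^p a_\ell z^\ell$ for $z\in\mathbb{C}\setminus\{0\}$. Assumptions: (A1) $\sum_{\ell=-r}^p a_\ell=0$ and $\sum_{\ell=-r}^p\ell a_\ell=a$. (A2) $\sum_{\sigma=0}^k\alpha_\sigma=0$ and $\sum_{\sigma=0}^k\sigma\alpha_\sigma=\sum_{\sigma=0}^{k-1}\beta_\sigma$. (A3) There is $C>0$ such that for all $\Delta t\in(0,1]$, every solution $(u_j^n)_{j\in\mathbb{Z},n\in\mathbb{N}}$ of $\sum_{\sigma=0}^k\alpha_\sigma u_j^{n+\sigma}+\lambda\sum_{\sigma=0}^{k-1}\beta_\sigma\sum_{\ell=-r}^pa_\ell u_{j+\ell}^{n+\sigma}=0$ ($j\in\mathbb{Z}$, $n\in\mathbb{N}$) satisfies $\sup_{n}\sum_{j\in\mathbb{Z}}\Delta x|u_j^n|^2\le C\sum_{\sigma=0}^{k-1}\sum_{j\in\mathbb{Z}}\Delta x|u_j^\sigma|^2$. (A4) $\mathcal A(e^{i\theta})\neq0$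 for all $\theta\in[-\pi,\pi]\setminus\{0\}$. Definitions (case $a<0$): - $(w_j)_{j\ge0}$ is the unique real sequence with $w_0=\dots=w_{r-1}=-1$, $\sum_{\ell=-r}^pa_\ell w_{j+\ell+r}=0$ for $j\ge0$, and $w_j\to0$. - $(\widetilde w_j)_{j\ge0}$ is the unique sequence with $\sum_{\ell=-r}^pa_\ell\widetilde w_{j+\ell}+w_j=0$ for $j\ge r$, $\widetilde w_0=\dots=\widetilde w_{r-1}=0$, and $\widetilde w_j\to0$. Both sequences exist under these assumptions and decay exponentially. - $u^{\rm int}_{j,n}=\frac1{\Delta x}\int_{x_j}^{x_{j+1}}u_0(x-a t^n)dx$ and $u^{\rm tr}_n=\frac1{\Delta t}\int_{t^n}^{t^{n+1}}u_0(-a t)dt$. - $u^{\rm bl,0}_{j,n}=u^{\rm bl,1}_{j,n}=0$ for $n=0,\dots,k-1$. For $n\ge k$: $u^{\rm bl,0}_{j,n}=u^{\rm tr}_nw_j$ and $u^{\rm bl,1}_{j,n}=\big(\Delta t\sum_{\sigma=0}^{k-1}\beta_\sigma\big)^{-1}\big(\sum_{\sigma=0}^k\alpha_\sigma u^{\rm tr}_{n+\sigma}\big)\widetilde w_j$. - $u^{\rm app}_{j,n}=u^{\rm int}_{j,n}+u^{\rm bl,0}_{j,n}+\Delta x\,u^{\rm bl,1}_{j,n}$. - $\varepsilon_{j,n+k}=\frac1{\Delta t}\big(\sum_{\sigma=0}^k\alpha_\sigma u^{\rm app}_{j,n+\sigma}+\lambda\sum_{\sigma=0}^{k-1}\beta_\sigma\sum_{\ell=-r}^pa_\ell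 u^{\rm app}_{j+\ell,n+\sigma}\big)$ for $j\ge r$, $n\ge0$. - $\eta_{j,n}=u^{\rm app}_{j,n}$ for $0\le j\le r-1$, $n\ge k$. *)

theory Defs
  imports "HOL-Analysis.Analysis"
begin

definition L2_Rplus :: "(real \<Rightarrow> real) \<Rightarrow> bool" where
  "L2_Rplus f \<longleftrightarrow> set_borel_measurable lborel {0..} f
      \<and> set_integrable lborel {0..} (\<lambda>x. (f x)\<^sup>2)"

definition L2sq :: "(real \<Rightarrow> real) \<Rightarrow> real" where
  "L2sq f = (LINT x:{0..}|lborel. (f x)\<^sup>2)"

text \<open>H2 on the half-line: u0, u0' = u1, u0'' = u2 all in L2(R+), with u0 and u1
  absolutely continuous (the continuous representative), i.e. u0 is the integral of its
  weak derivative u1, and u1 the integral of its weak derivative u2.\<close>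
definition H2_Rplus :: "(real \<Rightarrow> real) \<Rightarrow> (real \<Rightarrow> real) \<Rightarrow> (real \<Rightarrow> real) \<Rightarrow> bool" where
  "H2_Rplus u0 u1 u2 \<longleftrightarrow> L2_Rplus u0 \<and> L2_Rplus u1 \<and> L2_Rplus u2
      \<and> (\<forall>x\<ge>0. u0 x = u0 0 + (LINT t:{0..x}|lborel. u1 t))
      \<and> (\<forall>x\<ge>0. u1 x = u1 0 + (LINT t:{0..x}|lborel. u2 t))"

definition dxof :: "real \<Rightarrow> real \<Rightarrow> real" where
  "dxof lam dt = dt / lam"

definition u_int :: "(real \<Rightarrow> real) \<Rightarrow> real \<Rightarrow> real \<Rightarrow> real \<Rightarrow> nat \<Rightarrow> nat \<Rightarrow> real" where
  "u_int u0 a lam dt j n = (1 / dxof lam dt) *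
     (LINT x:{real j * dxof lam dt .. real (j + 1) * dxof lam dt}|lborel. u0 (x - a * (real n * dt)))"

definition u_tr :: "(real \<Rightarrow> real) \<Rightarrow> real \<Rightarrow> real \<Rightarrow> nat \<Rightarrow> real" where
  "u_tr u0 a dt n = (1 / dt) * (LINT t:{real n * dt .. real (n + 1) * dt}|lborel. u0 (- a * t))"

definition u_bl0 :: "(real \<Rightarrow> real) \<Rightarrow> real \<Rightarrow> real \<Rightarrow> nat \<Rightarrow> (nat \<Rightarrow> real) \<Rightarrow> nat \<Rightarrow> nat \<Rightarrow> real" where
  "u_bl0 u0 a dt k w j n = (if n < k then 0 else u_tr u0 a dt n * w j)"

definition u_bl1 :: "(real \<Rightarrow> real) \<Rightarrow> real \<Rightarrow> real \<Rightarrow> nat \<Rightarrow> (nat \<Rightarrow> real) \<Rightarrow> (nat \<Rightarrow> real)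
                     \<Rightarrow> (nat \<Rightarrow> real) \<Rightarrow> nat \<Rightarrow> nat \<Rightarrow> real" where
  "u_bl1 u0 a dt k alpha beta wt j n = (if n < k then 0 else
      inverse (dt * (\<Sum>\<sigma><k. beta \<sigma>)) * (\<Sum>\<sigma>\<le>k. alpha \<sigma> * u_tr u0 a dt (n + \<sigma>)) * wt j)"

definition u_app :: "(real \<Rightarrow> real) \<Rightarrow> real \<Rightarrow> real \<Rightarrow> real \<Rightarrow> nat \<Rightarrow> (nat \<Rightarrow> real) \<Rightarrow> (nat \<Rightarrow> real)
                     \<Rightarrow> (nat \<Rightarrow> real) \<Rightarrow> (nat \<Rightarrow> real) \<Rightarrow> nat \<Rightarrow> nat \<Rightarrow> real" where
  "u_app u0 a lam dt k alpha beta w wt j n =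
     u_int u0 a lam dt j n + u_bl0 u0 a dt k w j n + dxof lam dt * u_bl1 u0 a dt k alpha beta wt j n"

text \<open>Consistency error eps_{j,m}, meaningful for m >= k (m = n + k) and j >= r.\<close>
definition eps_err :: "(real \<Rightarrow> real) \<Rightarrow> real \<Rightarrow> real \<Rightarrow> real \<Rightarrow> nat \<Rightarrow> (nat \<Rightarrow> real) \<Rightarrow> (nat \<Rightarrow> real)
                     \<Rightarrow> (nat \<Rightarrow> real) \<Rightarrow> (nat \<Rightarrow> real) \<Rightarrow> nat \<Rightarrow> nat \<Rightarrow> (int \<Rightarrow> real) \<Rightarrow> nat \<Rightarrow> nat \<Rightarrow> real" where
  "eps_err u0 a lam dt k alpha beta w wt r p A j m =
     (1 / dt) * ((\<Sum>\<sigma>\<le>k. alpha \<sigma> * u_app u0 a lam dt k alpha beta w wt j (m - k + \<sigma>))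
       + lam * (\<Sum>\<sigma><k. beta \<sigma> * (\<Sum>l = - int r..int p.
            A l * u_app u0 a lam dt k alpha beta w wt (nat (int j + l)) (m - k + \<sigma>))))"

definition eta_err :: "(real \<Rightarrow> real) \<Rightarrow> real \<Rightarrow> real \<Rightarrow> real \<Rightarrow> nat \<Rightarrow> (nat \<Rightarrow> real) \<Rightarrow> (nat \<Rightarrow> real)
                     \<Rightarrow> (nat \<Rightarrow> real) \<Rightarrow> (nat \<Rightarrow> real) \<Rightarrow> nat \<Rightarrow> nat \<Rightarrow> real" where
  "eta_err u0 a lam dt k alpha beta w wt j n = u_app u0 a lam dt k alpha beta w wt j n"

definition stability_A3 :: "real \<Rightarrow> nat \<Rightarrow> nat \<Rightarrow> (int \<Rightarrow> real) \<Rightarrow> nat \<Rightarrow> (nat \<Rightarrow> real) \<Rightarrow> (nat \<Rightarrow> real) \<Rightarrow> bool" where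
  "stability_A3 lam r p A k alpha beta \<longleftrightarrow>
    (\<exists>C>0. \<forall>dt. 0 < dt \<and> dt \<le> 1 \<longrightarrow>
      (\<forall>u :: int \<Rightarrow> nat \<Rightarrow> real.
         (\<forall>j n. (\<Sum>\<sigma>\<le>k. alpha \<sigma> * u j (n + \<sigma>))
                + lam * (\<Sum>\<sigma><k. beta \<sigma> * (\<Sum>l = - int r..int p. A l * u (j + l) (n + \<sigma>))) = 0)
         \<longrightarrow> (\<forall>\<sigma><k. (\<lambda>j. dxof lam dt * \<bar>u j \<sigma>\<bar>\<^sup>2) summable_on UNIV)
         \<longrightarrow> (\<forall>n. (\<lambda>j. dxof lam dt * \<bar>u j n\<bar>\<^sup>2) summable_on UNIV
                 \<and> (\<Sum>\<^sub>\<infinity>j. dxof lam dt * \<bar>u j n\<bar>\<^sup>2)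
                     \<le> C * (\<Sum>\<sigma><k. \<Sum>\<^sub>\<infinity>j. dxof lam dt * \<bar>u j \<sigma>\<bar>\<^sup>2))))"

end

theory Submission
  imports Defs "HOL-Computational_Algebra.Fundamental_Theorem_Algebra"
begin

definition rec_op :: "complex poly \<Rightarrow> (nat \<Rightarrow> complex) \<Rightarrow> nat \<Rightarrow> complex" where
  "rec_op P w n = (\<Sum>i\<le>degree P. coeff P i * w (n + i))"

lemma rec_op_bound:
  assumes "degree P \<le> D"
  shows "rec_op P w n = (\<Sum>i\<le>D. coeff P i * w (n + i))"
proof -
  have "(\<Sum>i\<le>D. coeff P i * w (n + i)) = (\<Sum>i\<le>degree P. coeff P i * w (n + i))"
    by (rule sum.mono_neutral_right) (use assms in \<open>auto simp: coeff_eq_0 not_le\<close>)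
  thus ?thesis by (simp add: rec_op_def)
qed

lemma rec_op_factor:
  assumes "R \<noteq> 0"
  shows "rec_op ([:-\<mu>, 1:] * R) w n = rec_op R (\<lambda>m. w (Suc m) - \<mu> * w m) n"
proof -
  let ?D = "degree R"
  have nz: "[:-\<mu>, 1:] \<noteq> (0::complex poly)" by simp
  have deg: "degree ([:-\<mu>, 1:] * R) = Suc ?D"
    using degree_mult_eq[OF nz assms] by simp
  have c: "coeff ([:-\<mu>, 1:] * R) i = coeff (pCons 0 R) i - \<mu> * coeff R i" for i
    by (cases i) (simp_all add: mult_pCons_left algebra_simps)
  have "rec_op ([:-\<mu>, 1:] * R) w n = (\<Sum>i\<le>Suc ?D. coeff ([:-\<mu>, 1:] * R) i * w (n + i))"
    unfolding rec_op_def deg ..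
  also have "\<dots> = (\<Sum>i\<le>Suc ?D. coeff (pCons 0 R) i * w (n + i))
        - \<mu> * (\<Sum>i\<le>Suc ?D. coeff R i * w (n + i))"
    by (simp add: c algebra_simps sum_subtractf sum_distrib_left)
  also have "(\<Sum>i\<le>Suc ?D. coeff (pCons 0 R) i * w (n + i))
      = (\<Sum>i\<le>?D. coeff R i * w (Suc (n + i)))"
    by (subst sum.atMost_Suc_shift) simp
  also have "(\<Sum>i\<le>Suc ?D. coeff R i * w (n + i)) = (\<Sum>i\<le>?D. coeff R i * w (n + i))"
    by (simp add: coeff_eq_0)
  finally show ?thesis
    by (simp add: rec_op_def sum_subtractf sum_distrib_left algebra_simps coeff_pCons)
qed

definition geodecay :: "(nat \<Rightarrow> complex) \<Rightarrow> bool" where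
  "geodecay v \<longleftrightarrow> (\<exists>C \<rho>. 0 \<le> \<rho> \<and> \<rho> < 1 \<and> (\<forall>n. norm (v n) \<le> C * \<rho> ^ n))"

lemma geodecay_step:
  assumes v: "geodecay (\<lambda>m. w (Suc m) - \<mu> * w m)" and w: "w \<longlonglongrightarrow> 0"
  shows "geodecay w"
proof -
  obtain C \<rho> where \<rho>: "0 \<le> \<rho>" "\<rho> < 1" and C: "\<And>n. norm (w (Suc n) - \<mu> * w n) \<le> C * \<rho> ^ n"
    using v unfolding geodecay_def by blast
  have C0: "C \<ge> 0" using C[of 0] norm_ge_zero[of "w (Suc 0) - \<mu> * w 0"] by (simp del: norm_ge_zero)
  show ?thesis
  proof (cases "norm \<mu> < 1")
    case True
    define \<rho>' where "\<rho>' = max \<rho> ((1 + norm \<mu>) / 2)"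
    have r1: "\<rho>' < 1" "\<rho> \<le> \<rho>'" "norm \<mu> < \<rho>'" "0 \<le> \<rho>'"
      unfolding \<rho>'_def using True \<rho> by (auto simp: max_def)
    define K where "K = max (norm (w 0)) (C / (\<rho>' - norm \<mu>))"
    have K1: "K * (\<rho>' - norm \<mu>) \<ge> C"
    proof -
      have "C / (\<rho>' - norm \<mu>) \<le> K" by (simp add: K_def)
      then show ?thesis using r1 by (simp add: field_simps)
    qed
    have "norm (w n) \<le> K * \<rho>' ^ n" for n
    proof (induction n)
      case 0 thus ?case by (simp add: K_def)
    next
      case (Suc n)
      have "norm (w (Suc n)) \<le> norm (\<mu> * w n) + norm (w (Suc n) - \<mu> * w n)"
        by (metis add.commute diff_add_cancel norm_triangle_ineq)
      also have "\<dots> \<le> norm \<mu> * (K * \<rho>' ^ n) + C * \<rho> ^ n"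
        using C[of n] Suc by (intro add_mono) (auto simp: norm_mult intro: mult_left_mono)
      also have "C * \<rho> ^ n \<le> C * \<rho>' ^ n"
        using C0 r1 \<rho> by (intro mult_left_mono power_mono) auto
      also have "norm \<mu> * (K * \<rho>' ^ n) + C * \<rho>' ^ n \<le> norm \<mu> * (K * \<rho>' ^ n) + K * (\<rho>' - norm \<mu>) * \<rho>' ^ n"
        using K1 r1 by (intro add_left_mono mult_right_mono) auto
      also have "\<dots> = K * \<rho>' ^ Suc n" by (simp add: algebra_simps)
      finally show ?case by simp
    qed
    thus ?thesis unfolding geodecay_def using r1 by blast
  next
    case False
    hence mu1: "norm \<mu> \<ge> 1" by simp
    hence mu0: "\<mu> \<noteq> 0" by auto
    have rep: "norm (w n) \<le> norm (w (n + K)) + (\<Sum>i<K. C * \<rho> ^ (n + i))" for n K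
    proof (induction K)
      case 0 thus ?case by simp
    next
      case (Suc K)
      have "norm (w (n + K)) \<le> norm (w (n + Suc K)) + C * \<rho> ^ (n + K)"
      proof -
        have e: "w (n + K) = (w (Suc (n + K)) - (w (Suc (n + K)) - \<mu> * w (n + K))) / \<mu>"
          using mu0 by (simp add: field_simps)
        have "norm (w (n + K)) = norm (w (Suc (n + K)) - (w (Suc (n + K)) - \<mu> * w (n + K))) / norm \<mu>"
          by (metis e norm_divide)
        also have "\<dots> \<le> norm (w (Suc (n + K)) - (w (Suc (n + K)) - \<mu> * w (n + K)))"
          using mu1 by (simp add: divide_le_eq) (smt (verit) mult_le_cancel_left1 norm_ge_zero)
        also have "\<dots> \<le> norm (w (Suc (n + K))) + norm (w (Suc (n + K)) - \<mu> * w (n + K))"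
          by (rule norm_triangle_ineq4)
        also have "\<dots> \<le> norm (w (n + Suc K)) + C * \<rho> ^ (n + K)"
          using C[of "n+K"] by simp
        finally show ?thesis .
      qed
      with Suc show ?case by simp
    qed
    have gs: "(\<Sum>i<K. C * \<rho> ^ (n + i)) \<le> C * \<rho> ^ n / (1 - \<rho>)" for n K
    proof -
      have "(\<Sum>i<K. C * \<rho> ^ (n + i)) = C * \<rho> ^ n * (\<Sum>i<K. \<rho> ^ i)"
        by (simp add: power_add sum_distrib_left algebra_simps)
      also have "(\<Sum>i<K. \<rho> ^ i) \<le> 1 / (1 - \<rho>)"
        using \<rho> by (simp add: sum_gp_strict field_simps mult_left_le_one_le zero_le_power)
      hence "C * \<rho> ^ n * (\<Sum>i<K. \<rho> ^ i) \<le> C * \<rho> ^ n * (1 / (1 - \<rho>))"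
        using C0 \<rho> by (intro mult_left_mono) auto
      finally show ?thesis by simp
    qed
    have "norm (w n) \<le> (C / (1 - \<rho>)) * \<rho> ^ n" for n
    proof (rule ccontr)
      assume "\<not> ?thesis"
      hence eps: "norm (w n) - C * \<rho> ^ n / (1 - \<rho>) > 0" by simp
      from w have "(\<lambda>K. w (K + n)) \<longlonglongrightarrow> 0" by (rule LIMSEQ_ignore_initial_segment)
      then obtain K where "norm (w (K + n)) < norm (w n) - C * \<rho> ^ n / (1 - \<rho>)"
        using eps by (metis LIMSEQ_D diff_zero le_refl)
      with rep[of n K] gs[of n K] show False by (simp add: add.commute)
    qed
    thus ?thesis unfolding geodecay_def using \<rho> by blast
  qed
qed

lemma geodecay_rec:
  assumes "P \<noteq> 0" "\<And>n. rec_op P w n = x n" "geodecay x" "w \<longlonglongrightarrow> 0"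
  shows "geodecay w"
  using assms
proof (induction "degree P" arbitrary: P w x)
  case 0
  then obtain c where P: "P = [:c:]" by (metis degree_eq_zeroE)
  with 0 have c: "c \<noteq> 0" by auto
  have "w n = x n / c" for n using 0(3)[of n] c by (simp add: rec_op_def P field_simps)
  moreover obtain C \<rho> where "0 \<le> \<rho>" "\<rho> < 1" "\<And>n. norm (x n) \<le> C * \<rho> ^ n"
    using 0(4) unfolding geodecay_def by blast
  ultimately have "norm (w n) \<le> (C / norm c) * \<rho> ^ n" for n
    using c by (simp add: norm_divide divide_right_mono)
  thus ?case unfolding geodecay_def using \<open>0 \<le> \<rho>\<close> \<open>\<rho> < 1\<close> by blast
next
  case (Suc d)
  have "\<not> constant (poly P)"
    using Suc(2) by (simp add: constant_degree)
  then obtain \<mu> where "poly P \<mu> = 0" using fundamental_theorem_of_algebra by blast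
  then obtain R where PR: "P = [:-\<mu>, 1:] * R" by (metis dvdE poly_eq_0_iff_dvd)
  have R0: "R \<noteq> 0" using Suc(3) PR by auto
  have nz: "[:-\<mu>, 1:] \<noteq> (0::complex poly)" by simp
  have dR: "d = degree R" using Suc(2) PR degree_mult_eq[OF nz R0] by simp
  have "geodecay (\<lambda>m. w (Suc m) - \<mu> * w m)"
  proof (rule Suc(1)[OF dR R0 _ Suc(5)])
    show "rec_op R (\<lambda>m. w (Suc m) - \<mu> * w m) n = x n" for n
      using Suc(4)[of n] rec_op_factor[OF R0, of \<mu> w n] PR by simp
    have "(\<lambda>m. w (Suc m)) \<longlonglongrightarrow> 0" using Suc(6) by (rule LIMSEQ_Suc)
    then show "(\<lambda>m. w (Suc m) - \<mu> * w m) \<longlonglongrightarrow> 0"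
      using tendsto_diff[OF _ tendsto_mult[OF tendsto_const Suc(6)]] by force
  qed
  thus ?case using Suc(6) by (rule geodecay_step)
qed


definition rgeo :: "(nat \<Rightarrow> real) \<Rightarrow> bool" where
  "rgeo v \<longleftrightarrow> (\<exists>C \<rho>. 0 \<le> \<rho> \<and> \<rho> < 1 \<and> (\<forall>n. \<bar>v n\<bar> \<le> C * \<rho> ^ n))"

lemma rgeo_geodecay: "rgeo v \<longleftrightarrow> geodecay (\<lambda>n. complex_of_real (v n))"
  unfolding rgeo_def geodecay_def by simp

lemma int_sum_reindex:
  fixes r p :: nat and f :: "int \<Rightarrow> real"
  shows "(\<Sum>l = - int r..int p. f l) = (\<Sum>i\<le>r + p. f (int i - int r))"
  by (rule sum.reindex_bij_witness[where j="\<lambda>l. nat (l + int r)" and i="\<lambda>i. int i - int r"]) auto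

lemma rgeo_rec:
  fixes A :: "int \<Rightarrow> real" and y z :: "nat \<Rightarrow> real"
  assumes Ap: "A (int p) \<noteq> 0"
    and rec: "\<And>j. (\<Sum>l = - int r..int p. A l * y (nat (int j + l + int r))) = z j"
    and z: "rgeo z" and y: "y \<longlonglongrightarrow> 0"
  shows "rgeo y"
proof -
  define P where "P = Poly (map (\<lambda>i. complex_of_real (A (int i - int r))) [0..<r+p+1])"
  have cP: "coeff P i = (if i \<le> r + p then complex_of_real (A (int i - int r)) else 0)" for i
    by (auto simp: P_def nth_default_def simp del: upt_Suc)
  have P0: "P \<noteq> 0"
  proof
    assume "P = 0"
    hence "coeff P (r + p) = 0" by simp
    with Ap show False by (simp add: cP)
  qed
  have dP: "degree P \<le> r + p"
    by (rule degree_le) (simp add: cP)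
  have "rec_op P (\<lambda>n. complex_of_real (y n)) n = complex_of_real (z n)" for n
  proof -
    have "rec_op P (\<lambda>n. complex_of_real (y n)) n
        = (\<Sum>i\<le>r + p. coeff P i * complex_of_real (y (n + i)))"
      by (rule rec_op_bound[OF dP])
    also have "\<dots> = complex_of_real (\<Sum>i\<le>r + p. A (int i - int r) * y (n + i))"
      by (simp add: cP)
    also have "(\<Sum>i\<le>r + p. A (int i - int r) * y (n + i))
        = (\<Sum>l = - int r..int p. A l * y (nat (int n + l + int r)))"
      by (subst int_sum_reindex) (auto intro!: sum.cong simp: nat_add_distrib)
    finally show ?thesis using rec[of n] by simp
  qed
  moreover have "(\<lambda>n. complex_of_real (y n)) \<longlonglongrightarrow> 0"
    using tendsto_of_real[OF y] by simp
  ultimately show ?thesis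
    using geodecay_rec[OF P0] z by (simp add: rgeo_geodecay)
qed

lemma rgeo_zero: "rgeo (\<lambda>n. 0)"
  unfolding rgeo_def by (rule exI[of _ 0], rule exI[of _ 0]) auto

lemma rgeo_shift: "rgeo v \<Longrightarrow> rgeo (\<lambda>n. c * v (n + m))"
proof -
  assume "rgeo v"
  then obtain C \<rho> where r: "0 \<le> \<rho>" "\<rho> < 1" "\<And>n. \<bar>v n\<bar> \<le> C * \<rho> ^ n"
    unfolding rgeo_def by blast
  have "\<bar>c * v (n + m)\<bar> \<le> (\<bar>c\<bar> * C * \<rho> ^ m) * \<rho> ^ n" for n
    using mult_left_mono[OF r(3)[of "n+m"], of "\<bar>c\<bar>"] by (simp add: power_add abs_mult algebra_simps)
  thus ?thesis unfolding rgeo_def using r by blast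
qed

lemma rgeo_summable_sq:
  assumes "rgeo v" shows "summable (\<lambda>n. (v n)\<^sup>2)"
proof -
  obtain C \<rho> where r: "0 \<le> \<rho>" "\<rho> < 1" "\<And>n. \<bar>v n\<bar> \<le> C * \<rho> ^ n"
    using assms unfolding rgeo_def by blast
  have "(v n)\<^sup>2 \<le> C\<^sup>2 * (\<rho>\<^sup>2) ^ n" for n
  proof -
    have "(v n)\<^sup>2 = \<bar>v n\<bar>\<^sup>2" by simp
    also have "\<dots> \<le> (C * \<rho> ^ n)\<^sup>2" by (rule power_mono[OF r(3)]) simp
    finally show ?thesis by (simp add: power_mult_distrib power_mult[symmetric] mult.commute)
  qed
  moreover have "summable (\<lambda>n. C\<^sup>2 * (\<rho>\<^sup>2) ^ n)"
    using r by (intro summable_mult summable_geometric) (simp add: abs_square_less_1)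
  ultimately show ?thesis
    using summable_comparison_test'[of "\<lambda>n. C\<^sup>2 * (\<rho>\<^sup>2) ^ n" 0 "\<lambda>n. (v n)\<^sup>2"] by auto
qed


lemma bound_deriv1:
  fixes G g :: "real \<Rightarrow> real"
  assumes d: "\<And>x. x \<in> {s..s+H} \<Longrightarrow> (G has_real_derivative g x) (at x within {s..s+H})"
    and G0: "G s = 0" and b: "\<And>x. x \<in> {s..s+H} \<Longrightarrow> \<bar>g x\<bar> \<le> I"
    and x: "x \<in> {s..s+H}"
  shows "\<bar>G x\<bar> \<le> H * I"
proof -
  have "s \<in> {s..s+H}" using x by auto
  have I0: "0 \<le> I" using b[OF x] by simp
  have "norm (G x - G s) \<le> I * norm (x - s)"
    by (rule field_differentiable_bound[OF convex_real_interval(5) d]) (use b x \<open>s \<in> _\<close> in auto)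
  also have "\<dots> \<le> I * H" using x I0 by (intro mult_left_mono) auto
  finally show ?thesis using G0 by (simp add: mult.commute)
qed

lemma bound_deriv2:
  fixes G g h :: "real \<Rightarrow> real"
  assumes dG: "\<And>x. x \<in> {s..s+H} \<Longrightarrow> (G has_real_derivative g x) (at x within {s..s+H})"
    and dg: "\<And>x. x \<in> {s..s+H} \<Longrightarrow> (g has_real_derivative h x) (at x within {s..s+H})"
    and G0: "G s = 0" and g0: "g s = 0" and b: "\<And>x. x \<in> {s..s+H} \<Longrightarrow> \<bar>h x\<bar> \<le> I"
    and x: "x \<in> {s..s+H}"
  shows "\<bar>G x\<bar> \<le> H\<^sup>2 * I"
proof -
  have gb: "\<bar>g y\<bar> \<le> H * I" if "y \<in> {s..s+H}" for y
    by (rule bound_deriv1[OF dg g0 b that])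
  have "\<bar>G x\<bar> \<le> H * (H * I)"
    by (rule bound_deriv1[OF dG G0 gb x])
  thus ?thesis by (simp add: power2_eq_square algebra_simps)
qed

lemma integrable_cmul_real: "(f::real\<Rightarrow>real) integrable_on S \<Longrightarrow> (\<lambda>x. c * f x) integrable_on S"
  using integrable_cmul[of f S c] by simp

lemma functional_order3:
  fixes L :: "(real \<Rightarrow> real) \<Rightarrow> real" and F U Uv :: "real \<Rightarrow> real"
  assumes inv: "\<And>f c0 c1 c2. L (\<lambda>x. f x - (c0 + c1 * (x - s) + c2 * (x - s)\<^sup>2)) = L f"
    and bnd: "\<And>f B. (\<And>x. x \<in> {s..s+H} \<Longrightarrow> \<bar>f x\<bar> \<le> B) \<Longrightarrow> \<bar>L f\<bar> \<le> M * B"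
    and dF: "\<And>x. x \<in> {s..s+H} \<Longrightarrow> (F has_real_derivative U x) (at x within {s..s+H})"
    and dU: "\<And>x. x \<in> {s..s+H} \<Longrightarrow> (U has_real_derivative Uv x) (at x within {s..s+H})"
    and I: "\<And>x. x \<in> {s..s+H} \<Longrightarrow> \<bar>Uv x - Uv s\<bar> \<le> I"
  shows "\<bar>L F\<bar> \<le> M * (H\<^sup>2 * I)"
proof -
  define G where "G x = F x - (F s + U s * (x - s) + (Uv s / 2) * (x - s)\<^sup>2)" for x
  define g where "g x = U x - (U s + Uv s * (x - s))" for x
  have dG: "(G has_real_derivative g x) (at x within {s..s+H})" if "x \<in> {s..s+H}" for x
    unfolding G_def g_def
    by (rule derivative_eq_intros dF[OF that] refl | simp)+
  have dg: "(g has_real_derivative (Uv x - Uv s)) (at x within {s..s+H})" if "x \<in> {s..s+H}" for x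
    unfolding g_def
    by (rule derivative_eq_intros dU[OF that] refl | simp)+
  have "\<bar>G x\<bar> \<le> H\<^sup>2 * I" if "x \<in> {s..s+H}" for x
    by (rule bound_deriv2[OF dG dg _ _ I that]) (simp_all add: G_def g_def)
  hence "\<bar>L G\<bar> \<le> M * (H\<^sup>2 * I)" by (rule bnd)
  moreover have "L G = L F" unfolding G_def by (rule inv)
  ultimately show ?thesis by simp
qed

lemma functional_order2:
  fixes L :: "(real \<Rightarrow> real) \<Rightarrow> real" and F U :: "real \<Rightarrow> real"
  assumes inv: "\<And>f c0 c1. L (\<lambda>x. f x - (c0 + c1 * (x - s))) = L f"
    and bnd: "\<And>f B. (\<And>x. x \<in> {s..s+H} \<Longrightarrow> \<bar>f x\<bar> \<le> B) \<Longrightarrow> \<bar>L f\<bar> \<le> M * B"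
    and dF: "\<And>x. x \<in> {s..s+H} \<Longrightarrow> (F has_real_derivative U x) (at x within {s..s+H})"
    and I: "\<And>x. x \<in> {s..s+H} \<Longrightarrow> \<bar>U x - U s\<bar> \<le> I"
  shows "\<bar>L F\<bar> \<le> M * (H * I)"
proof -
  define G where "G x = F x - (F s + U s * (x - s))" for x
  have dG: "(G has_real_derivative (U x - U s)) (at x within {s..s+H})" if "x \<in> {s..s+H}" for x
    unfolding G_def
    by (rule derivative_eq_intros dF[OF that] refl | simp)+
  have "\<bar>G x\<bar> \<le> H * I" if "x \<in> {s..s+H}" for x
    by (rule bound_deriv1[OF dG _ I that]) (simp_all add: G_def)
  hence "\<bar>L G\<bar> \<le> M * (H * I)" by (rule bnd)
  moreover have "L G = L F" unfolding G_def by (rule inv)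
  ultimately show ?thesis by simp
qed

lemma telescope_windows:
  fixes \<Gamma> :: "nat \<Rightarrow> real"
  shows "(\<Sum>i<N. \<Gamma> (i + K) - \<Gamma> i) = (\<Sum>t<K. \<Gamma> (N + t) - \<Gamma> t)"
proof (induction N)
  case 0 thus ?case by simp
next
  case (Suc N)
  have "(\<Sum>t<K. \<Gamma> (Suc N + t) - \<Gamma> t) = (\<Sum>t<K. \<Gamma> (N + t) - \<Gamma> t) + (\<Sum>t<K. \<Gamma> (Suc (N + t)) - \<Gamma> (N + t))"
    by (simp add: sum.distrib[symmetric])
  also have "(\<Sum>t<K. \<Gamma> (Suc (N + t)) - \<Gamma> (N + t)) = \<Gamma> (N + K) - \<Gamma> N"
    using sum_lessThan_telescope[where f="\<lambda>t. \<Gamma> (N + t)" and m=K] by simp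
  finally show ?case using Suc by (simp add: add.commute)
qed

lemma overlap_sum:
  fixes f :: "real \<Rightarrow> real"
  assumes f0: "\<And>x. 0 \<le> f x" and fi: "\<And>b. f integrable_on {s0..b}"
    and fL: "\<And>b. integral {s0..b} f \<le> L" and h: "0 < h" and Q: "0 \<le> Q"
  shows "(\<Sum>i<N. integral {s0 + real i * h .. s0 + real i * h + Q * h} f) \<le> real (nat \<lceil>Q\<rceil>) * L"
proof -
  define K where "K = nat \<lceil>Q\<rceil>"
  define \<Gamma> where "\<Gamma> i = integral {s0 .. s0 + real i * h} f" for i
  have L0: "0 \<le> L" using fL[of s0] by simp
  have G0: "0 \<le> \<Gamma> i" for i unfolding \<Gamma>_def by (rule integral_nonneg[OF fi]) (use f0 in auto)
  have step: "integral {s0 + real i * h .. s0 + real i * h + Q * h} f \<le> \<Gamma> (i + K) - \<Gamma> i" for i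
  proof -
    let ?a = "s0 + real i * h" and ?b = "s0 + real i * h + Q * h" and ?c = "s0 + real (i + K) * h"
    have QK: "Q \<le> real K" unfolding K_def by linarith
    have hb: "?b \<le> ?c" using QK h by (simp add: algebra_simps)
    have ha: "?a \<le> ?b" using Q h by simp
    have s0a: "s0 \<le> ?a" using h by simp
    have "integral {?a..?c} f = integral {?a..?b} f + integral {?b..?c} f"
      by (rule Henstock_Kurzweil_Integration.integral_combine[symmetric, OF ha hb]) (rule integrable_on_subinterval[OF fi[of ?c]], use s0a in auto)
    moreover have "0 \<le> integral {?b..?c} f"
      by (rule integral_nonneg) (rule integrable_on_subinterval[OF fi[of ?c]], use s0a ha in auto, simp add: f0)
    moreover have "integral {s0..?c} f = integral {s0..?a} f + integral {?a..?c} f"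
      by (rule Henstock_Kurzweil_Integration.integral_combine[symmetric, OF s0a]) (use ha hb fi in auto)
    ultimately show ?thesis unfolding \<Gamma>_def by simp
  qed
  have "(\<Sum>i<N. integral {s0 + real i * h .. s0 + real i * h + Q * h} f) \<le> (\<Sum>i<N. \<Gamma> (i + K) - \<Gamma> i)"
    by (rule sum_mono[OF step])
  also have "\<dots> = (\<Sum>t<K. \<Gamma> (N + t) - \<Gamma> t)" by (rule telescope_windows)
  also have "\<dots> \<le> (\<Sum>t<K. L)"
    by (rule sum_mono) (use G0 fL in \<open>auto simp: \<Gamma>_def intro: order_trans\<close>, smt (verit) G0 \<Gamma>_def fL)
  finally show ?thesis by (simp add: K_def)
qed

lemma cauchy_schwarz_interval:
  fixes f :: "real \<Rightarrow> real"
  assumes fi: "f integrable_on {a..b}" and fa: "(\<lambda>x. \<bar>f x\<bar>) integrable_on {a..b}"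
    and f2: "(\<lambda>x. (f x)\<^sup>2) integrable_on {a..b}" and ab: "a \<le> b"
  shows "(integral {a..b} (\<lambda>x. \<bar>f x\<bar>))\<^sup>2 \<le> (b - a) * integral {a..b} (\<lambda>x. (f x)\<^sup>2)"
proof (cases "a = b")
  case True thus ?thesis by simp
next
  case False
  hence ab': "a < b" using ab by simp
  define J where "J = integral {a..b} (\<lambda>x. \<bar>f x\<bar>)"
  define t where "t = J / (b - a)"
  have int: "(\<lambda>x. (\<bar>f x\<bar> - t)\<^sup>2) integrable_on {a..b}"
  proof -
    have e: "(\<lambda>x. (\<bar>f x\<bar> - t)\<^sup>2) = (\<lambda>x. ((f x)\<^sup>2 - 2 * t * \<bar>f x\<bar>) + t\<^sup>2)"
      by (auto simp: power2_eq_square algebra_simps fun_eq_iff)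
    show ?thesis unfolding e
      by (intro integrable_add integrable_diff f2 integrable_const_ivl
            integrable_cmul_real fa)
  qed
  have "0 \<le> integral {a..b} (\<lambda>x. (\<bar>f x\<bar> - t)\<^sup>2)"
    by (rule integral_nonneg[OF int]) simp
  also have "integral {a..b} (\<lambda>x. (\<bar>f x\<bar> - t)\<^sup>2)
      = integral {a..b} (\<lambda>x. (f x)\<^sup>2) - 2 * t * J + t\<^sup>2 * (b - a)"
  proof -
    have e: "(\<lambda>x. (\<bar>f x\<bar> - t)\<^sup>2) = (\<lambda>x. ((f x)\<^sup>2 - (2 * t) * \<bar>f x\<bar>) + t\<^sup>2)"
      by (auto simp: power2_eq_square algebra_simps fun_eq_iff)
    show ?thesis unfolding e J_def
      using ab
      by (subst integral_add, (intro integrable_diff integrable_cmul_real f2 fa integrable_const_ivl)+)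
         (subst integral_diff, (intro integrable_cmul_real f2 fa)+, simp)
  qed
  finally have "2 * t * J - t\<^sup>2 * (b - a) \<le> integral {a..b} (\<lambda>x. (f x)\<^sup>2)" by simp
  moreover have "2 * t * J - t\<^sup>2 * (b - a) = J\<^sup>2 / (b - a)"
  proof -
    have tb: "t * (b - a) = J" using ab' by (simp add: t_def)
    have "t\<^sup>2 * (b - a) = t * J" using tb by (simp add: power2_eq_square mult.assoc)
    moreover have "t * J = J\<^sup>2 / (b - a)" by (simp add: t_def power2_eq_square)
    ultimately show ?thesis by simp
  qed
  ultimately have "J\<^sup>2 / (b - a) \<le> integral {a..b} (\<lambda>x. (f x)\<^sup>2)" by simp
  thus ?thesis using ab' unfolding J_def by (simp add: divide_le_eq mult.commute)
qed


lemma L2_local: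
  assumes L: "L2_Rplus f" and a: "0 \<le> a"
  shows "set_integrable lborel {a..b} f" "set_integrable lborel {a..b} (\<lambda>x. (f x)\<^sup>2)"
    "(LINT x:{a..b}|lborel. (f x)\<^sup>2) \<le> L2sq f"
proof -
  have m0: "set_borel_measurable lborel {0..} f" and i0: "set_integrable lborel {0..} (\<lambda>x. (f x)\<^sup>2)"
    using L by (auto simp: L2_Rplus_def)
  have sub: "{a..b} \<subseteq> {0..}" using a by auto
  show i2: "set_integrable lborel {a..b} (\<lambda>x. (f x)\<^sup>2)"
    by (rule set_integrable_subset[OF i0 _ sub]) simp
  have mab: "set_borel_measurable lborel {a..b} f"
  proof -
    have "(\<lambda>x. indicator {a..b} x *\<^sub>R f x) = (\<lambda>x. indicator {a..b} x * (indicator {0..} x *\<^sub>R f x))"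
      using sub by (auto simp: indicator_def fun_eq_iff)
    moreover have "(\<lambda>x. indicator {a..b} x * (indicator {0..} x *\<^sub>R f x)) \<in> borel_measurable lborel"
      using m0 unfolding set_borel_measurable_def by measurable
    ultimately show ?thesis unfolding set_borel_measurable_def by simp
  qed
  have c1: "set_integrable lborel {a..b} (\<lambda>x. 1::real)"
    unfolding set_integrable_def by (rule borel_integrable_compact) auto
  have "set_integrable lborel {a..b} (\<lambda>x. 1 + (f x)\<^sup>2)"
    using c1 i2 by (rule set_integral_add)
  then show "set_integrable lborel {a..b} f"
  proof (rule set_integrable_bound[OF _ mab])
    show "AE x in lborel. x \<in> {a..b} \<longrightarrow> norm (f x) \<le> norm (1 + (f x)\<^sup>2)"
    proof (intro AE_I2 impI)
      fix x
      have "0 \<le> (\<bar>f x\<bar> - 1)\<^sup>2" by simp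
      hence "0 \<le> (f x)\<^sup>2 - 2 * \<bar>f x\<bar> + 1" by (simp add: power2_eq_square algebra_simps)
      hence "\<bar>f x\<bar> \<le> 1 + (f x)\<^sup>2" by simp
      thus "norm (f x) \<le> norm (1 + (f x)\<^sup>2)" by simp
    qed
  qed
  show "(LINT x:{a..b}|lborel. (f x)\<^sup>2) \<le> L2sq f"
    unfolding L2sq_def set_lebesgue_integral_def
  proof (rule integral_mono)
    show "integrable lborel (\<lambda>x. indicat_real {a..b} x *\<^sub>R (f x)\<^sup>2)"
      using i2 by (simp add: set_integrable_def)
    show "integrable lborel (\<lambda>x. indicat_real {0..} x *\<^sub>R (f x)\<^sup>2)"
      using i0 by (simp add: set_integrable_def)
    show "indicat_real {a..b} x *\<^sub>R (f x)\<^sup>2 \<le> indicat_real {0..} x *\<^sub>R (f x)\<^sup>2" for x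
      using sub by (auto simp: indicator_def)
  qed
qed

lemma L2_local_HK:
  assumes L: "L2_Rplus f" and a: "0 \<le> a"
  shows "f integrable_on {a..b}" "(\<lambda>x. (f x)\<^sup>2) integrable_on {a..b}"
    "integral {a..b} (\<lambda>x. (f x)\<^sup>2) \<le> L2sq f"
    "(LINT x:{a..b}|lborel. f x) = integral {a..b} f"
    "(\<lambda>x. \<bar>f x\<bar>) integrable_on {a..b}"
  using set_borel_integral_eq_integral(1)[OF set_integrable_abs[OF L2_local(1)[OF L a]]] L2_local[OF L a, of b] set_borel_integral_eq_integral(1)[of "{a..b}" f]
    set_borel_integral_eq_integral(1)[of "{a..b}" "\<lambda>x. (f x)\<^sup>2"]
    set_borel_integral_eq_integral(2)[of "{a..b}" f]
    set_borel_integral_eq_integral(2)[of "{a..b}" "\<lambda>x. (f x)\<^sup>2"] by auto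


locale h2 =
  fixes u0 u1 u2 :: "real \<Rightarrow> real"
  assumes H: "H2_Rplus u0 u1 u2" and z: "u0 0 = 0"
begin

lemma L012: "L2_Rplus u0" "L2_Rplus u1" "L2_Rplus u2"
  using H by (auto simp: H2_Rplus_def)

lemma rep1: "0 \<le> x \<Longrightarrow> u1 x = u1 0 + integral {0..x} u2"
proof -
  assume x: "0 \<le> x"
  have "\<forall>x\<ge>0. u1 x = u1 0 + (LINT t:{0..x}|lborel. u2 t)" using H unfolding H2_Rplus_def by blast
  hence "u1 x = u1 0 + (LINT t:{0..x}|lborel. u2 t)" using x by blast
  thus ?thesis using L2_local_HK(4)[OF L012(3), of 0 x] by (simp only:)
qed

lemma rep0: "0 \<le> x \<Longrightarrow> u0 x = integral {0..x} u1"
proof -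
  assume x: "0 \<le> x"
  have "\<forall>x\<ge>0. u0 x = u0 0 + (LINT t:{0..x}|lborel. u1 t)" using H unfolding H2_Rplus_def by blast
  hence "u0 x = u0 0 + (LINT t:{0..x}|lborel. u1 t)" using x by blast
  thus ?thesis using L2_local_HK(4)[OF L012(2), of 0 x] z by simp
qed

lemma cont1: "continuous_on {0..b} u1"
proof -
  have "continuous_on {0..b} (\<lambda>x. u1 0 + integral {0..x} u2)"
    by (intro continuous_intros indefinite_integral_continuous_1 L2_local_HK(1)[OF L012(3)]) simp
  thus ?thesis by (rule continuous_on_eq) (auto intro: rep1[symmetric])
qed

lemma cont0: "continuous_on {0..b} u0"
proof -
  have "continuous_on {0..b} (\<lambda>x. integral {0..x} u1)"
    by (intro continuous_intros indefinite_integral_continuous_1 L2_local_HK(1)[OF L012(2)]) simp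
  thus ?thesis by (rule continuous_on_eq) (auto simp: rep0)
qed

lemma d0: "x \<in> {0..b} \<Longrightarrow> (u0 has_real_derivative u1 x) (at x within {0..b})"
proof -
  assume x: "x \<in> {0..b}"
  have "((\<lambda>y. integral {0..y} u1) has_real_derivative u1 x) (at x within {0..b})"
    unfolding has_real_derivative_iff_has_vector_derivative
    by (rule integral_has_vector_derivative[OF cont1 x])
  then show ?thesis
    by (rule has_field_derivative_transform_within[where d=1]) (use x in \<open>auto simp: rep0\<close>)
qed

definition FF :: "real \<Rightarrow> real" where "FF y = integral {0..y} u0"

lemma dF: "x \<in> {0..b} \<Longrightarrow> (FF has_real_derivative u0 x) (at x within {0..b})"
  unfolding has_real_derivative_iff_has_vector_derivative FF_def
  by (rule integral_has_vector_derivative[OF cont0])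

lemma d0': "x \<in> {s..s+H} \<Longrightarrow> 0 \<le> s \<Longrightarrow> (u0 has_real_derivative u1 x) (at x within {s..s+H})"
  by (rule DERIV_subset[OF d0[of x "s+H"]]) auto

lemma dF': "x \<in> {s..s+H} \<Longrightarrow> 0 \<le> s \<Longrightarrow> (FF has_real_derivative u0 x) (at x within {s..s+H})"
  by (rule DERIV_subset[OF dF[of x "s+H"]]) auto

lemma inc_gen:
  assumes L: "L2_Rplus g" and rep: "\<And>x. 0 \<le> x \<Longrightarrow> f x = f 0 + integral {0..x} g"
    and xy: "0 \<le> x" "x \<le> y"
  shows "\<bar>f y - f x\<bar> \<le> integral {x..y} (\<lambda>t. \<bar>g t\<bar>)"
proof -
  have "integral {0..x} g + integral {x..y} g = integral {0..y} g"
    by (rule Henstock_Kurzweil_Integration.integral_combine) (use xy L2_local_HK(1)[OF L] in auto)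
  hence "f y - f x = integral {x..y} g" using rep[of x] rep[of y] xy by simp
  also have "\<bar>\<dots>\<bar> \<le> integral {x..y} (\<lambda>t. \<bar>g t\<bar>)"
    using integral_norm_bound_integral[OF L2_local_HK(1)[OF L xy(1), of y] L2_local_HK(5)[OF L xy(1), of y]] xy by simp
  finally show ?thesis .
qed

lemma inc1: "0 \<le> x \<Longrightarrow> x \<le> y \<Longrightarrow> \<bar>u1 y - u1 x\<bar> \<le> integral {x..y} (\<lambda>t. \<bar>u2 t\<bar>)"
  by (rule inc_gen[OF L012(3) rep1])

lemma inc0: "0 \<le> x \<Longrightarrow> x \<le> y \<Longrightarrow> \<bar>u0 y - u0 x\<bar> \<le> integral {x..y} (\<lambda>t. \<bar>u1 t\<bar>)"
  by (rule inc_gen[OF L012(2)]) (auto simp: rep0 z)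

lemma abs_int_mono:
  assumes L: "L2_Rplus g" and "0 \<le> x" "x \<le> y" "y \<le> w"
  shows "integral {x..y} (\<lambda>t. \<bar>g t\<bar>) \<le> integral {x..w} (\<lambda>t. \<bar>g t\<bar>)"
proof -
  have "integral {x..y} (\<lambda>t. \<bar>g t\<bar>) + integral {y..w} (\<lambda>t. \<bar>g t\<bar>) = integral {x..w} (\<lambda>t. \<bar>g t\<bar>)"
    by (rule Henstock_Kurzweil_Integration.integral_combine) (use assms L2_local_HK(5)[OF L] in auto)
  moreover have "0 \<le> integral {y..w} (\<lambda>t. \<bar>g t\<bar>)"
    by (rule integral_nonneg) (use assms L2_local_HK(5)[OF L] in auto)
  ultimately show ?thesis by simp
qed

lemma window_bound:
  assumes L: "L2_Rplus g" and rep: "\<And>x. 0 \<le> x \<Longrightarrow> f x = f 0 + integral {0..x} g"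
    and s: "0 \<le> s" and H: "0 \<le> H" and x: "x \<in> {s..s+H}"
  shows "\<bar>f x - f s\<bar> \<le> integral {s..s+H} (\<lambda>t. \<bar>g t\<bar>)"
  using inc_gen[OF L rep, of s x] abs_int_mono[OF L, of s x "s+H"] s x by auto

lemma cs_window:
  assumes L: "L2_Rplus g" and s: "0 \<le> s" and H: "0 \<le> H"
  shows "(integral {s..s+H} (\<lambda>t. \<bar>g t\<bar>))\<^sup>2 \<le> H * integral {s..s+H} (\<lambda>t. (g t)\<^sup>2)"
  using cauchy_schwarz_interval[OF L2_local_HK(1,5,2)[OF L s], of "s+H"] H by simp

lemma sup1: assumes "0 \<le> x" shows "(u1 x)\<^sup>2 \<le> 2 * (L2sq u1 + L2sq u2)"
proof -
  define A where "A = integral {x..x+1} (\<lambda>t. \<bar>u1 t\<bar>)"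
  define B where "B = integral {x..x+1} (\<lambda>t. \<bar>u2 t\<bar>)"
  have pt: "\<bar>u1 x\<bar> \<le> \<bar>u1 y\<bar> + B" if "y \<in> {x..x+1}" for y
  proof -
    have "\<bar>u1 y - u1 x\<bar> \<le> B"
      using window_bound[OF L012(3) rep1 assms, of 1 y] that unfolding B_def by simp
    thus ?thesis using abs_triangle_ineq4[of "u1 y" "u1 y - u1 x"] by simp
  qed
  have "integral {x..x+1} (\<lambda>y. \<bar>u1 x\<bar>) \<le> integral {x..x+1} (\<lambda>y. \<bar>u1 y\<bar> + B)"
    by (rule integral_le) (use pt L2_local_HK(5)[OF L012(2) assms] in \<open>auto intro!: integrable_add\<close>)
  moreover have "integral {x..x+1} (\<lambda>y. \<bar>u1 y\<bar> + B) = A + B"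
    unfolding A_def using L2_local_HK(5)[OF L012(2) assms, of "x+1"]
    by (subst integral_add) auto
  ultimately have u: "\<bar>u1 x\<bar> \<le> A + B" by simp
  have A2: "A\<^sup>2 \<le> L2sq u1"
    using cs_window[OF L012(2) assms, of 1] L2_local_HK(3)[OF L012(2) assms, of "x+1"] by (simp add: A_def)
  have B2: "B\<^sup>2 \<le> L2sq u2"
    using cs_window[OF L012(3) assms, of 1] L2_local_HK(3)[OF L012(3) assms, of "x+1"] by (simp add: B_def)
  have A0: "0 \<le> A" unfolding A_def by (rule integral_nonneg) (use L2_local_HK(5)[OF L012(2) assms] in auto)
  have B0: "0 \<le> B" unfolding B_def by (rule integral_nonneg) (use L2_local_HK(5)[OF L012(3) assms] in auto)
  have "(u1 x)\<^sup>2 = \<bar>u1 x\<bar>\<^sup>2" by simp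
  also have "\<dots> \<le> (A + B)\<^sup>2" using u by (intro power_mono) auto
  also have "\<dots> \<le> 2 * A\<^sup>2 + 2 * B\<^sup>2"
    using sum_squares_bound[of A B] by (simp add: power2_eq_square algebra_simps)
  finally show ?thesis using A2 B2 by simp
qed

end


locale params =
  fixes a lam :: real and r p k :: nat and A :: "int \<Rightarrow> real" and alpha beta :: "nat \<Rightarrow> real"
  assumes a_neg: "a < 0" and lam_pos: "lam > 0"
    and A1a: "(\<Sum>l = - int r..int p. A l) = 0" and A1b: "(\<Sum>l = - int r..int p. of_int l * A l) = a"
    and A2a: "(\<Sum>\<sigma>\<le>k. alpha \<sigma>) = 0" and A2b: "(\<Sum>\<sigma>\<le>k. real \<sigma> * alpha \<sigma>) = (\<Sum>\<sigma><k. beta \<sigma>)"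
begin

definition "c = - a"
definition "Sb = (\<Sum>\<sigma><k. beta \<sigma>)"
definition "Sa = (\<Sum>\<sigma>\<le>k. \<bar>alpha \<sigma>\<bar>)"
definition "Sbeta = (\<Sum>\<sigma><k. \<bar>beta \<sigma>\<bar>)"
definition "SA = (\<Sum>l = - int r..int p. \<bar>A l\<bar>)"

lemma c_pos: "c > 0" using a_neg by (simp add: c_def)

lemma sum_alpha_lin: "(\<Sum>\<sigma>\<le>k. alpha \<sigma> * (X + Y * real \<sigma>)) = Y * Sb"
proof -
  have "(\<Sum>\<sigma>\<le>k. alpha \<sigma> * (X + Y * real \<sigma>)) = X * (\<Sum>\<sigma>\<le>k. alpha \<sigma>) + Y * (\<Sum>\<sigma>\<le>k. real \<sigma> * alpha \<sigma>)"
    by (simp add: algebra_simps sum.distrib sum_distrib_left)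
  thus ?thesis by (simp add: A2a A2b Sb_def)
qed

lemma sum_A_lin: "(\<Sum>l = - int r..int p. A l * (X + Z * of_int l)) = Z * a"
proof -
  have "(\<Sum>l = - int r..int p. A l * (X + Z * of_int l)) = X * (\<Sum>l = - int r..int p. A l) + Z * (\<Sum>l = - int r..int p. of_int l * A l)"
    by (simp add: algebra_simps sum.distrib sum_distrib_left)
  thus ?thesis by (simp add: A1a A1b)
qed

end

locale scheme = params +
  fixes dt :: real
  assumes dt_pos: "dt > 0"
begin

definition "dx = dt / lam"
lemma dx_pos: "dx > 0" using dt_pos lam_pos by (simp add: dx_def)
lemma lam_dx: "lam * dx = dt" using lam_pos by (simp add: dx_def)

definition Iv :: "(real \<Rightarrow> real) \<Rightarrow> int \<Rightarrow> nat \<Rightarrow> real" where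
  "Iv f j m = (f (real_of_int (j + 1) * dx + c * (real m * dt)) - f (real_of_int j * dx + c * (real m * dt))) / dx"

definition Tv :: "(real \<Rightarrow> real) \<Rightarrow> nat \<Rightarrow> real" where
  "Tv f m = (f (c * (real (m + 1) * dt)) - f (c * (real m * dt))) / (c * dt)"

definition RI :: "(real \<Rightarrow> real) \<Rightarrow> int \<Rightarrow> nat \<Rightarrow> real" where
  "RI f j m = (1 / dt) * ((\<Sum>\<sigma>\<le>k. alpha \<sigma> * Iv f j (m + \<sigma>))
     + lam * (\<Sum>\<sigma><k. beta \<sigma> * (\<Sum>l = - int r..int p. A l * Iv f (j + l) (m + \<sigma>))))"

definition b0 :: "(real \<Rightarrow> real) \<Rightarrow> nat \<Rightarrow> real" where
  "b0 f m = (if m < k then 0 else Tv f m)"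

definition DD :: "(real \<Rightarrow> real) \<Rightarrow> nat \<Rightarrow> real" where
  "DD f m = (\<Sum>\<tau>\<le>k. alpha \<tau> * Tv f (m + \<tau>))"

definition b1 :: "(real \<Rightarrow> real) \<Rightarrow> nat \<Rightarrow> real" where
  "b1 f m = (if m < k then 0 else inverse (dt * Sb) * DD f m)"

definition EE :: "(real \<Rightarrow> real) \<Rightarrow> nat \<Rightarrow> real" where
  "EE f m = (1 / dt) * ((\<Sum>\<sigma>\<le>k. alpha \<sigma> * b0 f (m + \<sigma>)) - lam * dx * (\<Sum>\<sigma><k. beta \<sigma> * b1 f (m + \<sigma>)))"

definition FC :: "(real \<Rightarrow> real) \<Rightarrow> nat \<Rightarrow> real" where
  "FC f m = (dx / dt) * (\<Sum>\<sigma>\<le>k. alpha \<sigma> * b1 f (m + \<sigma>))"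

definition ETA :: "(real \<Rightarrow> real) \<Rightarrow> nat \<Rightarrow> nat \<Rightarrow> real" where
  "ETA f j n = Iv f (int j) n - Tv f n"

lemma eps_decomp:
  fixes u0 :: "real \<Rightarrow> real" and f :: "real \<Rightarrow> real" and w wt :: "nat \<Rightarrow> real"
  assumes uint: "\<And>j m. u_int u0 a lam dt j m = Iv f (int j) m"
    and utr: "\<And>m. u_tr u0 a dt m = Tv f m"
    and w_rec: "\<forall>j. (\<Sum>l = - int r..int p. A l * w (nat (int j + l + int r))) = 0"
    and wt_rec: "\<forall>j\<ge>r. (\<Sum>l = - int r..int p. A l * wt (nat (int j + l))) + w j = 0"
    and n: "k \<le> n"
  shows "eps_err u0 a lam dt k alpha beta w wt r p A (i + r) n
     = RI f (int (i + r)) (n - k) + w (i + r) * EE f (n - k) + wt (i + r) * FC f (n - k)"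
proof -
  define j where "j = i + r"
  define m where "m = n - k"
  have dxof: "dxof lam dt = dx" by (simp add: dxof_def dx_def)
  have app: "u_app u0 a lam dt k alpha beta w wt jj mm = Iv f (int jj) mm + b0 f mm * w jj + dx * (b1 f mm * wt jj)" for jj mm
    by (simp add: u_app_def u_bl0_def u_bl1_def b0_def b1_def DD_def dxof uint utr Sb_def)
  have inner: "(\<Sum>l = - int r..int p. A l * u_app u0 a lam dt k alpha beta w wt (nat (int j + l)) mm)
      = (\<Sum>l = - int r..int p. A l * Iv f (int j + l) mm) - dx * b1 f mm * w j" for mm
  proof -
    have "(\<Sum>l = - int r..int p. A l * u_app u0 a lam dt k alpha beta w wt (nat (int j + l)) mm)
      = (\<Sum>l = - int r..int p. A l * Iv f (int j + l) mm)
        + b0 f mm * (\<Sum>l = - int r..int p. A l * w (nat (int i + l + int r)))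
        + dx * b1 f mm * (\<Sum>l = - int r..int p. A l * wt (nat (int j + l)))"
    proof -
      have "int (nat (int j + l)) = int j + l" if "l \<in> {- int r..int p}" for l
        using that by (simp add: j_def)
      hence "(\<Sum>l = - int r..int p. A l * u_app u0 a lam dt k alpha beta w wt (nat (int j + l)) mm)
        = (\<Sum>l = - int r..int p. A l * Iv f (int j + l) mm + b0 f mm * (A l * w (nat (int i + l + int r)))
            + dx * b1 f mm * (A l * wt (nat (int j + l))))"
        by (intro sum.cong refl) (simp add: app algebra_simps j_def)
      thus ?thesis by (simp add: sum.distrib sum_distrib_left)
    qed
    also have "\<dots> = (\<Sum>l = - int r..int p. A l * Iv f (int j + l) mm) - dx * b1 f mm * w j"
    proof -
      have e1: "(\<Sum>l = - int r..int p. A l * w (nat (int i + l + int r))) = 0" using w_rec by blast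
      have e2: "(\<Sum>l = - int r..int p. A l * wt (nat (int j + l))) = - w j"
        using wt_rec[rule_format, of j] by (simp add: j_def eq_neg_iff_add_eq_0 add.commute)
      show ?thesis unfolding e1 e2 by simp
    qed
    finally show ?thesis .
  qed
  have "eps_err u0 a lam dt k alpha beta w wt r p A j n
      = (1 / dt) * ((\<Sum>\<sigma>\<le>k. alpha \<sigma> * (Iv f (int j) (m + \<sigma>) + b0 f (m + \<sigma>) * w j + dx * (b1 f (m + \<sigma>) * wt j)))
        + lam * (\<Sum>\<sigma><k. beta \<sigma> * ((\<Sum>l = - int r..int p. A l * Iv f (int j + l) (m + \<sigma>)) - dx * b1 f (m + \<sigma>) * w j)))"
    unfolding eps_err_def inner by (simp add: app m_def)
  also have "\<dots> = RI f (int j) m + w j * EE f m + wt j * FC f m"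
    unfolding RI_def EE_def FC_def
    by (simp add: algebra_simps sum.distrib sum_distrib_left sum_distrib_right sum_subtractf)
  finally show ?thesis by (simp add: j_def m_def)
qed


lemma Iv_diff: "Iv (\<lambda>x. f x - g x) j m = Iv f j m - Iv g j m"
  by (simp add: Iv_def diff_divide_distrib)
lemma Tv_diff: "Tv (\<lambda>x. f x - g x) m = Tv f m - Tv g m"
  by (simp add: Tv_def diff_divide_distrib)
lemma RI_diff: "RI (\<lambda>x. f x - g x) j m = RI f j m - RI g j m"
  by (simp add: RI_def Iv_diff right_diff_distrib sum_subtractf diff_divide_distrib add_divide_distrib)
lemma b0_diff: "b0 (\<lambda>x. f x - g x) m = b0 f m - b0 g m"
  by (simp add: b0_def Tv_diff)
lemma DD_diff: "DD (\<lambda>x. f x - g x) m = DD f m - DD g m"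
  by (simp add: DD_def Tv_diff right_diff_distrib sum_subtractf)
lemma b1_diff: "b1 (\<lambda>x. f x - g x) m = b1 f m - b1 g m"
  by (simp add: b1_def DD_diff right_diff_distrib)
lemma EE_diff: "EE (\<lambda>x. f x - g x) m = EE f m - EE g m"
  by (simp add: EE_def b0_diff b1_diff right_diff_distrib sum_subtractf)
lemma FC_diff: "FC (\<lambda>x. f x - g x) m = FC f m - FC g m"
  by (simp add: FC_def b1_diff right_diff_distrib sum_subtractf)
lemma ETA_diff: "ETA (\<lambda>x. f x - g x) j n = ETA f j n - ETA g j n"
  by (simp add: ETA_def Iv_diff Tv_diff)

subsection \<open>Annihilation of polynomials\<close>

lemma Iv_q: "Iv (\<lambda>x. c0 + c1 * (x - s) + c2 * (x - s)\<^sup>2) j m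
    = c1 + c2 * (2 * (of_int j * dx + c * (real m * dt) - s) + dx)"
  using dx_pos by (simp add: Iv_def field_simps power2_eq_square)

lemma Tv_q: "Tv (\<lambda>x. c0 + c1 * (x - s) + c2 * (x - s)\<^sup>2) m
    = (c1 + c2 * (c * dt - 2 * s)) + (2 * c2 * c * dt) * real m"
  using c_pos dt_pos by (simp add: Tv_def field_simps power2_eq_square)

lemma RI_q: "RI (\<lambda>x. c0 + c1 * (x - s) + c2 * (x - s)\<^sup>2) j m = 0"
proof -
  let ?q = "\<lambda>x. c0 + c1 * (x - s) + c2 * (x - s)\<^sup>2"
  define X where "X = c1 + c2 * (2 * (of_int j * dx + c * (real m * dt) - s) + dx)"
  define Y where "Y = 2 * c2 * c * dt"
  define Z where "Z = 2 * c2 * dx"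
  have e1: "Iv ?q j (m + \<sigma>) = X + Y * real \<sigma>" for \<sigma>
    unfolding Iv_q by (simp add: X_def Y_def algebra_simps)
  have e2: "Iv ?q (j + l) (m + \<sigma>) = (X + Y * real \<sigma>) + Z * of_int l" for \<sigma> l
    unfolding Iv_q by (simp add: X_def Y_def Z_def algebra_simps)
  have "RI ?q j m = (1 / dt) * (Y * Sb + lam * (\<Sum>\<sigma><k. beta \<sigma> * (Z * a)))"
    unfolding RI_def e1 e2 sum_alpha_lin sum_A_lin ..
  also have "\<dots> = (1 / dt) * (Y * Sb + lam * Z * a * Sb)"
    by (simp add: Sb_def sum_distrib_right sum_distrib_left algebra_simps)
  also have "\<dots> = (1 / dt) * (2 * c2 * Sb * dt * (c + a))"
  proof -
    have "lam * Z = 2 * c2 * (lam * dx)" by (simp add: Z_def algebra_simps)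
    also have "\<dots> = 2 * c2 * dt" by (simp add: lam_dx)
    finally have lz: "lam * Z = 2 * c2 * dt" .
    show ?thesis unfolding lz by (simp add: Y_def algebra_simps)
  qed
  also have "\<dots> = 0" by (simp add: c_def)
  finally show ?thesis .
qed

lemma DD_q: "DD (\<lambda>x. c0 + c1 * (x - s) + c2 * (x - s)\<^sup>2) m' = (2 * c2 * c * dt) * Sb"
proof -
  have "DD (\<lambda>x. c0 + c1 * (x - s) + c2 * (x - s)\<^sup>2) m'
     = (\<Sum>\<tau>\<le>k. alpha \<tau> * (((c1 + c2 * (c * dt - 2 * s)) + (2 * c2 * c * dt) * real m') + (2 * c2 * c * dt) * real \<tau>))"
    unfolding DD_def Tv_q by (simp add: algebra_simps)
  thus ?thesis by (simp only: sum_alpha_lin)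
qed

lemma EE_q: assumes "k \<le> m" shows "EE (\<lambda>x. c0 + c1 * (x - s) + c2 * (x - s)\<^sup>2) m = 0"
proof -
  let ?q = "\<lambda>x. c0 + c1 * (x - s) + c2 * (x - s)\<^sup>2"
  define Q0 where "Q0 = 2 * c2 * c * dt"
  define P0 where "P0 = c1 + c2 * (c * dt - 2 * s)"
  have e0: "b0 ?q (m + \<sigma>) = (P0 + Q0 * real m) + Q0 * real \<sigma>" for \<sigma>
  proof -
    have "\<not> m + \<sigma> < k" using assms by simp
    thus ?thesis unfolding b0_def Tv_q by (simp add: P0_def Q0_def algebra_simps)
  qed
  have e1: "b1 ?q (m + \<sigma>) = inverse (dt * Sb) * (Q0 * Sb)" for \<sigma>
  proof -
    have "\<not> m + \<sigma> < k" using assms by simp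
    thus ?thesis unfolding b1_def DD_q by (simp add: Q0_def)
  qed
  have "EE ?q m = (1 / dt) * (Q0 * Sb - lam * dx * (Sb * (inverse (dt * Sb) * (Q0 * Sb))))"
    unfolding EE_def e0 e1 sum_alpha_lin by (simp add: Sb_def sum_distrib_right)
  also have "\<dots> = 0"
    using lam_dx dt_pos by (cases "Sb = 0") (simp_all add: field_simps)
  finally show ?thesis .
qed

lemma FC_q: assumes "k \<le> m" shows "FC (\<lambda>x. c0 + c1 * (x - s) + c2 * (x - s)\<^sup>2) m = 0"
proof -
  have e1: "b1 (\<lambda>x. c0 + c1 * (x - s) + c2 * (x - s)\<^sup>2) (m + \<sigma>) = inverse (dt * Sb) * ((2 * c2 * c * dt) * Sb)" for \<sigma>
  proof -
    have "\<not> m + \<sigma> < k" using assms by simp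
    thus ?thesis unfolding b1_def DD_q by simp
  qed
  show ?thesis unfolding FC_def e1 by (simp add: sum_distrib_right[symmetric] A2a)
qed

lemma ETA_q: "ETA (\<lambda>x. c0 + c1 * (x - s)) j n = 0"
proof -
  have "ETA (\<lambda>x. c0 + c1 * (x - s) + 0 * (x - s)\<^sup>2) j n = 0"
    unfolding ETA_def Iv_q Tv_q by simp
  thus ?thesis by simp
qed

lemma RI_inv: "RI (\<lambda>x. f x - (c0 + c1 * (x - s) + c2 * (x - s)\<^sup>2)) j m = RI f j m"
  unfolding RI_diff RI_q by simp
lemma EE_inv: "k \<le> m \<Longrightarrow> EE (\<lambda>x. f x - (c0 + c1 * (x - s) + c2 * (x - s)\<^sup>2)) m = EE f m"
  unfolding EE_diff by (subst EE_q) simp_all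
lemma FC_inv: "k \<le> m \<Longrightarrow> FC (\<lambda>x. f x - (c0 + c1 * (x - s) + c2 * (x - s)\<^sup>2)) m = FC f m"
  unfolding FC_diff by (subst FC_q) simp_all
lemma ETA_inv: "ETA (\<lambda>x. f x - (c0 + c1 * (x - s))) j n = ETA f j n"
  unfolding ETA_diff ETA_q by simp


lemma abs_wsum:
  fixes wgt X :: "'i \<Rightarrow> real"
  assumes "\<And>i. i \<in> S \<Longrightarrow> \<bar>X i\<bar> \<le> M"
  shows "\<bar>\<Sum>i\<in>S. wgt i * X i\<bar> \<le> (\<Sum>i\<in>S. \<bar>wgt i\<bar>) * M"
proof (cases "finite S")
  case True
  have "\<bar>\<Sum>i\<in>S. wgt i * X i\<bar> \<le> (\<Sum>i\<in>S. \<bar>wgt i * X i\<bar>)" by (rule sum_abs)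
  also have "\<dots> \<le> (\<Sum>i\<in>S. \<bar>wgt i\<bar> * M)"
    by (rule sum_mono) (simp add: abs_mult assms mult_left_mono)
  finally show ?thesis by (simp add: sum_distrib_right)
next
  case False thus ?thesis by simp
qed

lemma Iv_bnd:
  assumes "\<bar>f (of_int (j + 1) * dx + c * (real m * dt))\<bar> \<le> B" "\<bar>f (of_int j * dx + c * (real m * dt))\<bar> \<le> B"
  shows "\<bar>Iv f j m\<bar> \<le> 2 * B / dx"
proof -
  have "\<bar>Iv f j m\<bar> = \<bar>f (of_int (j + 1) * dx + c * (real m * dt)) - f (of_int j * dx + c * (real m * dt))\<bar> / dx"
    using dx_pos by (simp add: Iv_def abs_divide)
  also have "\<dots> \<le> 2 * B / dx"
    using dx_pos assms by (intro divide_right_mono) (auto simp: abs_diff_le_iff abs_le_iff)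
  finally show ?thesis .
qed

lemma Tv_bnd:
  assumes "\<bar>f (c * (real (q + 1) * dt))\<bar> \<le> B" "\<bar>f (c * (real q * dt))\<bar> \<le> B"
  shows "\<bar>Tv f q\<bar> \<le> 2 * B / (c * dt)"
proof -
  have cd: "c * dt > 0" using c_pos dt_pos by simp
  have "\<bar>Tv f q\<bar> = \<bar>f (c * (real (q + 1) * dt)) - f (c * (real q * dt))\<bar> / (c * dt)"
    using cd by (simp add: Tv_def abs_divide)
  also have "\<dots> \<le> 2 * B / (c * dt)"
    using cd assms by (intro divide_right_mono) (auto simp: abs_diff_le_iff abs_le_iff)
  finally show ?thesis .
qed

lemma pt_T:
  assumes "m \<le> q" "q \<le> m + N"
  shows "c * (real q * dt) \<in> {c * (real m * dt) .. c * (real m * dt) + c * (real N * dt)}"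
proof -
  have cd: "c * dt > 0" using c_pos dt_pos by simp
  have "c * (real q * dt) = c * (real m * dt) + (c * dt) * (real q - real m)" by (simp add: algebra_simps)
  moreover have "0 \<le> (c * dt) * (real q - real m)" using cd assms by simp
  moreover have "(c * dt) * (real q - real m) \<le> c * (real N * dt)"
  proof -
    have "(c * dt) * (real q - real m) \<le> (c * dt) * real N"
      using cd assms by (intro mult_left_mono) auto
    thus ?thesis by (simp add: algebra_simps)
  qed
  ultimately show ?thesis by simp
qed

lemma pt_I:
  assumes "of_int j - int r \<le> qq" "qq \<le> of_int j + int p + 1" "\<sigma> \<le> k"
  shows "of_int qq * dx + c * (real (m + \<sigma>) * dt)
     \<in> {(of_int j - real r) * dx + c * (real m * dt) .. (of_int j - real r) * dx + c * (real m * dt) + (real (r + p + 1) * dx + c * (real k * dt))}"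
proof -
  have cd: "c * dt > 0" using c_pos dt_pos by simp
  have q1: "(of_int j - real r) * dx \<le> of_int qq * dx"
    using assms(1) dx_pos by (intro mult_right_mono) (auto simp flip: of_int_le_iff)
  have q2: "of_int qq * dx \<le> (of_int j - real r) * dx + real (r + p + 1) * dx"
  proof -
    have "real_of_int qq \<le> of_int j - real r + real (r + p + 1)"
      using assms(2) by (simp flip: of_int_le_iff)
    hence "of_int qq * dx \<le> (of_int j - real r + real (r + p + 1)) * dx"
      using dx_pos by (intro mult_right_mono) auto
    thus ?thesis by (simp add: algebra_simps)
  qed
  have t1: "c * (real m * dt) \<le> c * (real (m + \<sigma>) * dt)"
  proof -
    have "0 \<le> (c * dt) * real \<sigma>" using cd by simp
    thus ?thesis by (simp add: algebra_simps)
  qed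
  have t2: "c * (real (m + \<sigma>) * dt) \<le> c * (real m * dt) + c * (real k * dt)"
  proof -
    have "(c * dt) * real \<sigma> \<le> (c * dt) * real k" using cd assms(3) by (intro mult_left_mono) auto
    thus ?thesis by (simp add: algebra_simps)
  qed
  show ?thesis using q1 q2 t1 t2 by simp
qed

lemma RI_bnd:
  assumes B: "\<And>x. x \<in> {(of_int j - real r) * dx + c * (real m * dt) .. (of_int j - real r) * dx + c * (real m * dt) + (real (r + p + 1) * dx + c * (real k * dt))} \<Longrightarrow> \<bar>f x\<bar> \<le> B"
  shows "\<bar>RI f j m\<bar> \<le> (1 / dt) * (Sa * (2 * B / dx) + lam * (Sbeta * (SA * (2 * B / dx))))"
proof -
  have Ivb: "\<bar>Iv f (j + l) (m + \<sigma>)\<bar> \<le> 2 * B / dx" if "l \<in> {- int r..int p}" "\<sigma> \<le> k" for l \<sigma>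
    by (rule Iv_bnd; rule B; rule pt_I) (use that in auto)
  have s1: "\<bar>\<Sum>\<sigma>\<le>k. alpha \<sigma> * Iv f j (m + \<sigma>)\<bar> \<le> Sa * (2 * B / dx)"
    unfolding Sa_def by (rule abs_wsum) (use Ivb[of 0] in auto)
  have s2: "\<bar>\<Sum>\<sigma><k. beta \<sigma> * (\<Sum>l = - int r..int p. A l * Iv f (j + l) (m + \<sigma>))\<bar> \<le> Sbeta * (SA * (2 * B / dx))"
    unfolding Sbeta_def
    by (rule abs_wsum, unfold SA_def, rule abs_wsum) (use Ivb in auto)
  have "\<bar>RI f j m\<bar> \<le> (1 / dt) * (\<bar>\<Sum>\<sigma>\<le>k. alpha \<sigma> * Iv f j (m + \<sigma>)\<bar>
      + lam * \<bar>\<Sum>\<sigma><k. beta \<sigma> * (\<Sum>l = - int r..int p. A l * Iv f (j + l) (m + \<sigma>))\<bar>)"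
  proof -
    let ?X = "\<Sum>\<sigma>\<le>k. alpha \<sigma> * Iv f j (m + \<sigma>)"
    let ?Y = "\<Sum>\<sigma><k. beta \<sigma> * (\<Sum>l = - int r..int p. A l * Iv f (j + l) (m + \<sigma>))"
    have "\<bar>RI f j m\<bar> = (1 / dt) * \<bar>?X + lam * ?Y\<bar>" unfolding RI_def using dt_pos by (simp add: abs_mult)
    also have "\<bar>?X + lam * ?Y\<bar> \<le> \<bar>?X\<bar> + lam * \<bar>?Y\<bar>"
      using abs_triangle_ineq[of ?X "lam * ?Y"] lam_pos by (simp add: abs_mult)
    hence "(1 / dt) * \<bar>?X + lam * ?Y\<bar> \<le> (1 / dt) * (\<bar>?X\<bar> + lam * \<bar>?Y\<bar>)"
      using dt_pos by (intro mult_left_mono) auto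
    finally show ?thesis .
  qed
  also have "\<dots> \<le> (1 / dt) * (Sa * (2 * B / dx) + lam * (Sbeta * (SA * (2 * B / dx))))"
    using dt_pos lam_pos s1 s2 by (intro mult_left_mono add_mono) auto
  finally show ?thesis .
qed

definition "WE m = {c * (real m * dt) .. c * (real m * dt) + c * (real (2 * k + 1) * dt)}"

lemma Tv_bnd_W:
  assumes B: "\<And>x. x \<in> WE m \<Longrightarrow> \<bar>f x\<bar> \<le> B" and q: "m \<le> q" "q \<le> m + 2 * k"
  shows "\<bar>Tv f q\<bar> \<le> 2 * B / (c * dt)"
  by (rule Tv_bnd; rule B; unfold WE_def; rule pt_T) (use q in auto)

lemma b0_bnd_W:
  assumes B: "\<And>x. x \<in> WE m \<Longrightarrow> \<bar>f x\<bar> \<le> B" and q: "m \<le> q" "q \<le> m + 2 * k"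
  shows "\<bar>b0 f q\<bar> \<le> 2 * B / (c * dt)"
proof -
  have "0 \<le> 2 * B / (c * dt)" using Tv_bnd_W[of m f B, OF B q] by linarith
  thus ?thesis using Tv_bnd_W[of m f B, OF B q] by (simp add: b0_def)
qed

lemma DD_bnd_W:
  assumes B: "\<And>x. x \<in> WE m \<Longrightarrow> \<bar>f x\<bar> \<le> B" and q: "m \<le> q" "q \<le> m + k"
  shows "\<bar>DD f q\<bar> \<le> Sa * (2 * B / (c * dt))"
  unfolding DD_def Sa_def by (rule abs_wsum) (rule Tv_bnd_W[of m f B, OF B], use q in auto)

lemma b1_bnd_W:
  assumes B: "\<And>x. x \<in> WE m \<Longrightarrow> \<bar>f x\<bar> \<le> B" and q: "m \<le> q" "q \<le> m + k"
  shows "\<bar>b1 f q\<bar> \<le> \<bar>inverse (dt * Sb)\<bar> * (Sa * (2 * B / (c * dt)))"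
proof -
  have DDb: "\<bar>DD f q\<bar> \<le> Sa * (2 * B / (c * dt))"
    by (rule DD_bnd_W) (use B q in auto)
  show ?thesis
  proof (cases "q < k")
    case True
    have M0: "0 \<le> Sa * (2 * B / (c * dt))" using DDb by linarith
    have "b1 f q = 0" using True by (simp add: b1_def)
    thus ?thesis using mult_nonneg_nonneg[OF abs_ge_zero[of "inverse (dt * Sb)"] M0] by simp
  next
    case False
    have "\<bar>b1 f q\<bar> = \<bar>inverse (dt * Sb)\<bar> * \<bar>DD f q\<bar>" using False by (simp add: b1_def abs_mult)
    also have "\<dots> \<le> \<bar>inverse (dt * Sb)\<bar> * (Sa * (2 * B / (c * dt)))"
      by (rule mult_left_mono[OF DDb]) (rule abs_ge_zero)
    finally show ?thesis .
  qed
qed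

lemma EE_bnd:
  assumes B: "\<And>x. x \<in> WE m \<Longrightarrow> \<bar>f x\<bar> \<le> B"
  shows "\<bar>EE f m\<bar> \<le> (1 / dt) * (Sa * (2 * B / (c * dt)) + lam * dx * (Sbeta * (\<bar>inverse (dt * Sb)\<bar> * (Sa * (2 * B / (c * dt))))))"
proof -
  have s1: "\<bar>\<Sum>\<sigma>\<le>k. alpha \<sigma> * b0 f (m + \<sigma>)\<bar> \<le> Sa * (2 * B / (c * dt))"
    unfolding Sa_def by (rule abs_wsum) (rule b0_bnd_W[of m f B, OF B], auto)
  have s2: "\<bar>\<Sum>\<sigma><k. beta \<sigma> * b1 f (m + \<sigma>)\<bar> \<le> Sbeta * (\<bar>inverse (dt * Sb)\<bar> * (Sa * (2 * B / (c * dt))))"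
    unfolding Sbeta_def by (rule abs_wsum) (rule b1_bnd_W[of m f B, OF B], auto)
  have ld: "0 \<le> lam * dx" using lam_pos dx_pos by simp
  have "\<bar>EE f m\<bar> \<le> (1 / dt) * (\<bar>\<Sum>\<sigma>\<le>k. alpha \<sigma> * b0 f (m + \<sigma>)\<bar> + lam * dx * \<bar>\<Sum>\<sigma><k. beta \<sigma> * b1 f (m + \<sigma>)\<bar>)"
  proof -
    let ?X = "\<Sum>\<sigma>\<le>k. alpha \<sigma> * b0 f (m + \<sigma>)"
    let ?Y = "\<Sum>\<sigma><k. beta \<sigma> * b1 f (m + \<sigma>)"
    have "\<bar>EE f m\<bar> = (1 / dt) * \<bar>?X - lam * dx * ?Y\<bar>" unfolding EE_def using dt_pos by (simp add: abs_mult)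
    also have "\<bar>?X - lam * dx * ?Y\<bar> \<le> \<bar>?X\<bar> + lam * dx * \<bar>?Y\<bar>"
      using abs_triangle_ineq4[of ?X "lam * dx * ?Y"] lam_pos dx_pos by (simp add: abs_mult)
    hence "(1 / dt) * \<bar>?X - lam * dx * ?Y\<bar> \<le> (1 / dt) * (\<bar>?X\<bar> + lam * dx * \<bar>?Y\<bar>)"
      using dt_pos by (intro mult_left_mono) auto
    finally show ?thesis .
  qed
  also have "\<dots> \<le> (1 / dt) * (Sa * (2 * B / (c * dt)) + lam * dx * (Sbeta * (\<bar>inverse (dt * Sb)\<bar> * (Sa * (2 * B / (c * dt))))))"
    using dt_pos ld s1 s2 by (intro mult_left_mono add_mono) auto
  finally show ?thesis .
qed

lemma FC_bnd:
  assumes B: "\<And>x. x \<in> WE m \<Longrightarrow> \<bar>f x\<bar> \<le> B"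
  shows "\<bar>FC f m\<bar> \<le> (dx / dt) * (Sa * (\<bar>inverse (dt * Sb)\<bar> * (Sa * (2 * B / (c * dt)))))"
proof -
  have "\<And>\<sigma>. \<sigma> \<in> {..k} \<Longrightarrow> \<bar>b1 f (m + \<sigma>)\<bar> \<le> \<bar>inverse (dt * Sb)\<bar> * (Sa * (2 * B / (c * dt)))"
    by (rule b1_bnd_W[of m f B, OF B]) auto
  from abs_wsum[where S="{..k}" and X="\<lambda>\<sigma>. b1 f (m + \<sigma>)" and wgt=alpha
      and M="\<bar>inverse (dt * Sb)\<bar> * (Sa * (2 * B / (c * dt)))", OF this]
  have s1: "\<bar>\<Sum>\<sigma>\<le>k. alpha \<sigma> * b1 f (m + \<sigma>)\<bar> \<le> Sa * (\<bar>inverse (dt * Sb)\<bar> * (Sa * (2 * B / (c * dt))))"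
    by (simp add: Sa_def)
  have "\<bar>FC f m\<bar> = (dx / dt) * \<bar>\<Sum>\<sigma>\<le>k. alpha \<sigma> * b1 f (m + \<sigma>)\<bar>"
    unfolding FC_def using dt_pos dx_pos by (simp add: abs_mult)
  also have "\<dots> \<le> (dx / dt) * (Sa * (\<bar>inverse (dt * Sb)\<bar> * (Sa * (2 * B / (c * dt)))))"
    by (rule mult_left_mono[OF s1]) (use dt_pos dx_pos in simp)
  finally show ?thesis .
qed

lemma ETA_bnd:
  assumes B: "\<And>x. x \<in> {c * (real n * dt) .. c * (real n * dt) + (real r * dx + c * dt)} \<Longrightarrow> \<bar>f x\<bar> \<le> B"
    and j: "j < r"
  shows "\<bar>ETA f j n\<bar> \<le> 2 * B / dx + 2 * B / (c * dt)"
proof -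
  have cd: "c * dt > 0" using c_pos dt_pos by simp
  have jr: "real j * dx + dx \<le> real r * dx"
  proof -
    have "real (j + 1) * dx \<le> real r * dx" using j dx_pos by (intro mult_right_mono) auto
    thus ?thesis by (simp add: algebra_simps)
  qed
  have "\<bar>Iv f (int j) n\<bar> \<le> 2 * B / dx"
    by (rule Iv_bnd; rule B) (use dx_pos cd jr in \<open>auto simp: algebra_simps\<close>)
  moreover have "\<bar>Tv f n\<bar> \<le> 2 * B / (c * dt)"
    by (rule Tv_bnd; rule B) (use dx_pos cd in \<open>auto simp: algebra_simps\<close>)
  ultimately show ?thesis unfolding ETA_def by linarith
qed

end

locale sh = scheme + h2
begin

lemma FTC_shift:
  assumes ab: "\<alpha> \<le> \<beta>" and C: "0 \<le> \<alpha> + C"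
  shows "(LINT x:{\<alpha>..\<beta>}|lborel. u0 (x + C)) = FF (\<beta> + C) - FF (\<alpha> + C)"
  unfolding set_lebesgue_integral_def
proof (rule integral_FTC_atLeastAtMost[OF ab])
  show "continuous_on {\<alpha>..\<beta>} (\<lambda>x. u0 (x + C))"
    by (rule continuous_on_compose2[OF cont0[of "\<beta> + C"]]) (use C in \<open>auto intro!: continuous_intros\<close>)
  fix x assume x: "\<alpha> \<le> x" "x \<le> \<beta>"
  have d1: "(FF has_real_derivative u0 (x + C)) (at (x + C) within ((\<lambda>x. x + C) ` {\<alpha>..\<beta>}))"
    by (rule DERIV_subset[OF dF[of "x + C" "\<beta> + C"]]) (use x C in auto)
  have d2: "((\<lambda>x. x + C) has_real_derivative 1) (at x within {\<alpha>..\<beta>})"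
    by (rule derivative_eq_intros refl | simp)+
  from DERIV_image_chain[OF d1 d2]
  show "((\<lambda>x. FF (x + C)) has_vector_derivative u0 (x + C)) (at x within {\<alpha>..\<beta>})"
    by (simp add: has_real_derivative_iff_has_vector_derivative o_def)
qed

lemma FTC_scale:
  assumes ab: "\<alpha> \<le> \<beta>" and a0: "0 \<le> \<alpha>"
  shows "(LINT t:{\<alpha>..\<beta>}|lborel. u0 (c * t)) = FF (c * \<beta>) / c - FF (c * \<alpha>) / c"
  unfolding set_lebesgue_integral_def
proof (rule integral_FTC_atLeastAtMost[OF ab])
  have cp: "c > 0" by (rule c_pos)
  show "continuous_on {\<alpha>..\<beta>} (\<lambda>x. u0 (c * x))"
    by (rule continuous_on_compose2[OF cont0[of "c * \<beta>"]]) (use cp a0 in \<open>auto intro!: continuous_intros mult_left_mono\<close>)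
  fix x assume x: "\<alpha> \<le> x" "x \<le> \<beta>"
  have d1: "(FF has_real_derivative u0 (c * x)) (at (c * x) within ((\<lambda>x. c * x) ` {\<alpha>..\<beta>}))"
    by (rule DERIV_subset[OF dF[of "c * x" "c * \<beta>"]]) (use x cp a0 in \<open>auto intro: mult_left_mono\<close>)
  have d2: "((\<lambda>x. c * x) has_real_derivative c) (at x within {\<alpha>..\<beta>})"
    by (rule derivative_eq_intros refl | simp)+
  from DERIV_cdivide[OF DERIV_image_chain[OF d1 d2], of c]
  show "((\<lambda>x. FF (c * x) / c) has_vector_derivative u0 (c * x)) (at x within {\<alpha>..\<beta>})"
    using cp by (simp add: has_real_derivative_iff_has_vector_derivative o_def)
qed

lemma uint: "u_int u0 a lam dt j m = Iv FF (int j) m"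
proof -
  have C0: "0 \<le> c * (real m * dt)" using c_pos dt_pos by simp
  have e: "(\<lambda>x. u0 (x - a * (real m * dt))) = (\<lambda>x. u0 (x + c * (real m * dt)))"
    by (simp add: c_def)
  have "(LINT x:{real j * dx..real (j + 1) * dx}|lborel. u0 (x + c * (real m * dt)))
      = FF (real (j + 1) * dx + c * (real m * dt)) - FF (real j * dx + c * (real m * dt))"
    by (rule FTC_shift) (use dx_pos C0 in \<open>auto intro: mult_right_mono\<close>)
  thus ?thesis
    unfolding u_int_def Iv_def e dxof_def dx_def[symmetric] by (simp add: add.commute)
qed

lemma utr: "u_tr u0 a dt m = Tv FF m"
proof -
  have e: "(\<lambda>t. u0 (- a * t)) = (\<lambda>t. u0 (c * t))" by (simp add: c_def)
  have "(LINT t:{real m * dt..real (m + 1) * dt}|lborel. u0 (c * t))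
      = FF (c * (real (m + 1) * dt)) / c - FF (c * (real m * dt)) / c"
    by (rule FTC_scale) (use dt_pos in \<open>auto intro: mult_right_mono\<close>)
  thus ?thesis
    unfolding u_tr_def Tv_def e using c_pos dt_pos by (simp add: field_simps)
qed


lemma rep0': "0 \<le> x \<Longrightarrow> u0 x = u0 0 + integral {0..x} u1"
  using rep0 z by simp

lemma L2sq_nonneg: "L2_Rplus f \<Longrightarrow> 0 \<le> L2sq f"
  using L2_local_HK(3)[of f 0 0] by simp

definition "HI = real (r + p + 1) * dx + c * (real k * dt)"
definition "MI = (1 / dt) * (Sa * (2 / dx) + lam * (Sbeta * (SA * (2 / dx))))"
definition "HE = c * (real (2 * k + 1) * dt)"
definition "ME = (1 / dt) * (Sa * (2 / (c * dt)) + lam * dx * (Sbeta * (\<bar>inverse (dt * Sb)\<bar> * (Sa * (2 / (c * dt))))))"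
definition "MF = (dx / dt) * (Sa * (\<bar>inverse (dt * Sb)\<bar> * (Sa * (2 / (c * dt)))))"
definition "HT = real r * dx + c * dt"
definition "MT = 2 / dx + 2 / (c * dt)"
definition "H0 = c * (real (3 * k) * dt)"

lemma cdt_pos: "c * dt > 0" using c_pos dt_pos by simp
lemma cm0: "0 \<le> c * (real m * dt)" using c_pos dt_pos by simp

lemma RI_est:
  "\<bar>RI FF (int (i + r)) m\<bar> \<le> MI * (HI\<^sup>2 * integral {real i * dx + c * (real m * dt) .. real i * dx + c * (real m * dt) + HI} (\<lambda>t. \<bar>u2 t\<bar>))"
proof -
  define s where "s = real i * dx + c * (real m * dt)"
  have s0: "0 \<le> s" unfolding s_def using dx_pos cm0[of m] by simp
  have H0: "0 \<le> HI" unfolding HI_def using dx_pos c_pos dt_pos by (intro add_nonneg_nonneg mult_nonneg_nonneg) auto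
  have win: "(of_int (int (i + r)) - real r) * dx + c * (real m * dt) = s" by (simp add: s_def)
  show ?thesis unfolding s_def[symmetric]
  proof (rule functional_order3[where L="\<lambda>f. RI f (int (i + r)) m" and U=u0 and Uv=u1])
    show "RI (\<lambda>x. f x - (c0 + c1 * (x - s) + c2 * (x - s)\<^sup>2)) (int (i + r)) m = RI f (int (i + r)) m" for f c0 c1 c2
      by (rule RI_inv)
    show "\<bar>RI f (int (i + r)) m\<bar> \<le> MI * B" if "\<And>x. x \<in> {s..s + HI} \<Longrightarrow> \<bar>f x\<bar> \<le> B" for f B
    proof -
      have "\<bar>RI f (int (i + r)) m\<bar> \<le> (1 / dt) * (Sa * (2 * B / dx) + lam * (Sbeta * (SA * (2 * B / dx))))"
        apply (rule RI_bnd)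
        apply (rule that)
        apply (simp only: win HI_def)
        done
      also have "\<dots> = MI * B" by (simp add: MI_def algebra_simps)
      finally show ?thesis .
    qed
    show "(FF has_real_derivative u0 x) (at x within {s..s + HI})" if "x \<in> {s..s + HI}" for x
      by (rule dF'[OF that s0])
    show "(u0 has_real_derivative u1 x) (at x within {s..s + HI})" if "x \<in> {s..s + HI}" for x
      by (rule d0'[OF that s0])
    show "\<bar>u1 x - u1 s\<bar> \<le> integral {s..s + HI} (\<lambda>t. \<bar>u2 t\<bar>)" if "x \<in> {s..s + HI}" for x
      by (rule window_bound[OF L012(3) rep1 s0 H0 that])
  qed
qed

lemma EE_est:
  assumes "k \<le> m"
  shows "\<bar>EE FF m\<bar> \<le> ME * (HE\<^sup>2 * integral {c * (real m * dt) .. c * (real m * dt) + HE} (\<lambda>t. \<bar>u2 t\<bar>))"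
proof -
  define s where "s = c * (real m * dt)"
  have s0: "0 \<le> s" unfolding s_def by (rule cm0)
  have H0: "0 \<le> HE" unfolding HE_def using c_pos dt_pos by (intro mult_nonneg_nonneg) auto
  show ?thesis unfolding s_def[symmetric]
  proof (rule functional_order3[where L="\<lambda>f. EE f m" and U=u0 and Uv=u1])
    show "EE (\<lambda>x. f x - (c0 + c1 * (x - s) + c2 * (x - s)\<^sup>2)) m = EE f m" for f c0 c1 c2
      by (rule EE_inv[OF assms])
    show "\<bar>EE f m\<bar> \<le> ME * B" if "\<And>x. x \<in> {s..s + HE} \<Longrightarrow> \<bar>f x\<bar> \<le> B" for f B
    proof -
      have "\<bar>EE f m\<bar> \<le> (1 / dt) * (Sa * (2 * B / (c * dt)) + lam * dx * (Sbeta * (\<bar>inverse (dt * Sb)\<bar> * (Sa * (2 * B / (c * dt))))))"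
        by (rule EE_bnd) (use that in \<open>simp add: WE_def s_def HE_def\<close>)
      also have "\<dots> = ME * B" by (simp add: ME_def algebra_simps)
      finally show ?thesis .
    qed
    show "(FF has_real_derivative u0 x) (at x within {s..s + HE})" if "x \<in> {s..s + HE}" for x
      by (rule dF'[OF that s0])
    show "(u0 has_real_derivative u1 x) (at x within {s..s + HE})" if "x \<in> {s..s + HE}" for x
      by (rule d0'[OF that s0])
    show "\<bar>u1 x - u1 s\<bar> \<le> integral {s..s + HE} (\<lambda>t. \<bar>u2 t\<bar>)" if "x \<in> {s..s + HE}" for x
      by (rule window_bound[OF L012(3) rep1 s0 H0 that])
  qed
qed

lemma FC_est:
  assumes "k \<le> m"
  shows "\<bar>FC FF m\<bar> \<le> MF * (HE\<^sup>2 * integral {c * (real m * dt) .. c * (real m * dt) + HE} (\<lambda>t. \<bar>u2 t\<bar>))"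
proof -
  define s where "s = c * (real m * dt)"
  have s0: "0 \<le> s" unfolding s_def by (rule cm0)
  have H0: "0 \<le> HE" unfolding HE_def using c_pos dt_pos by (intro mult_nonneg_nonneg) auto
  show ?thesis unfolding s_def[symmetric]
  proof (rule functional_order3[where L="\<lambda>f. FC f m" and U=u0 and Uv=u1])
    show "FC (\<lambda>x. f x - (c0 + c1 * (x - s) + c2 * (x - s)\<^sup>2)) m = FC f m" for f c0 c1 c2
      by (rule FC_inv[OF assms])
    show "\<bar>FC f m\<bar> \<le> MF * B" if "\<And>x. x \<in> {s..s + HE} \<Longrightarrow> \<bar>f x\<bar> \<le> B" for f B
    proof -
      have "\<bar>FC f m\<bar> \<le> (dx / dt) * (Sa * (\<bar>inverse (dt * Sb)\<bar> * (Sa * (2 * B / (c * dt)))))"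
        by (rule FC_bnd) (use that in \<open>simp add: WE_def s_def HE_def\<close>)
      also have "\<dots> = MF * B" by (simp add: MF_def algebra_simps)
      finally show ?thesis .
    qed
    show "(FF has_real_derivative u0 x) (at x within {s..s + HE})" if "x \<in> {s..s + HE}" for x
      by (rule dF'[OF that s0])
    show "(u0 has_real_derivative u1 x) (at x within {s..s + HE})" if "x \<in> {s..s + HE}" for x
      by (rule d0'[OF that s0])
    show "\<bar>u1 x - u1 s\<bar> \<le> integral {s..s + HE} (\<lambda>t. \<bar>u2 t\<bar>)" if "x \<in> {s..s + HE}" for x
      by (rule window_bound[OF L012(3) rep1 s0 H0 that])
  qed
qed

definition "SS = sqrt (2 * (L2sq u1 + L2sq u2))"

lemma FF_small:
  assumes x: "x \<in> {0..0 + H0}"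
  shows "\<bar>FF x\<bar> \<le> H0\<^sup>2 * SS"
proof (rule bound_deriv2[OF _ _ _ _ _ x])
  show "(FF has_real_derivative u0 y) (at y within {0..0 + H0})" if "y \<in> {0..0 + H0}" for y
    by (rule dF'[OF that]) simp
  show "(u0 has_real_derivative u1 y) (at y within {0..0 + H0})" if "y \<in> {0..0 + H0}" for y
    by (rule d0'[OF that]) simp
  show "FF 0 = 0" by (simp add: FF_def)
  show "u0 0 = 0" by (rule z)
  show "\<bar>u1 y\<bar> \<le> SS" if "y \<in> {0..0 + H0}" for y
  proof -
    have "(u1 y)\<^sup>2 \<le> 2 * (L2sq u1 + L2sq u2)" by (rule sup1) (use that in auto)
    hence "sqrt ((u1 y)\<^sup>2) \<le> SS" unfolding SS_def by (rule real_sqrt_le_mono)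
    thus ?thesis by simp
  qed
qed

lemma WE_sub: assumes "m < k" shows "WE m \<subseteq> {0..0 + H0}"
proof
  fix x assume x: "x \<in> WE m"
  have "c * (real m * dt) + c * (real (2 * k + 1) * dt) = (c * dt) * (real m + real (2 * k + 1))"
    by (simp add: algebra_simps)
  also have "\<dots> \<le> (c * dt) * real (3 * k)"
    using cdt_pos assms by (intro mult_left_mono) auto
  finally have "c * (real m * dt) + c * (real (2 * k + 1) * dt) \<le> H0" by (simp add: H0_def algebra_simps)
  moreover have "0 \<le> c * (real m * dt)" by (rule cm0)
  ultimately show "x \<in> {0..0 + H0}" using x by (auto simp: WE_def)
qed

lemma EE_mid: assumes "m < k" shows "\<bar>EE FF m\<bar> \<le> ME * (H0\<^sup>2 * SS)"
proof -
  have "\<bar>EE FF m\<bar> \<le> (1 / dt) * (Sa * (2 * (H0\<^sup>2 * SS) / (c * dt)) + lam * dx * (Sbeta * (\<bar>inverse (dt * Sb)\<bar> * (Sa * (2 * (H0\<^sup>2 * SS) / (c * dt))))))"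
    apply (rule EE_bnd)
    apply (rule FF_small)
    using WE_sub[OF assms] by (rule subsetD)
  also have "\<dots> = ME * (H0\<^sup>2 * SS)" by (simp add: ME_def algebra_simps)
  finally show ?thesis .
qed

lemma FC_mid: assumes "m < k" shows "\<bar>FC FF m\<bar> \<le> MF * (H0\<^sup>2 * SS)"
proof -
  have "\<bar>FC FF m\<bar> \<le> (dx / dt) * (Sa * (\<bar>inverse (dt * Sb)\<bar> * (Sa * (2 * (H0\<^sup>2 * SS) / (c * dt)))))"
    apply (rule FC_bnd)
    apply (rule FF_small)
    using WE_sub[OF assms] by (rule subsetD)
  also have "\<dots> = MF * (H0\<^sup>2 * SS)" by (simp add: MF_def algebra_simps)
  finally show ?thesis .
qed

lemma ETA_est:
  assumes j: "j < r"
  shows "\<bar>ETA FF j n\<bar> \<le> MT * (HT * integral {c * (real n * dt) .. c * (real n * dt) + HT} (\<lambda>t. \<bar>u1 t\<bar>))"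
proof -
  define s where "s = c * (real n * dt)"
  have s0: "0 \<le> s" unfolding s_def by (rule cm0)
  have H0: "0 \<le> HT" unfolding HT_def using dx_pos c_pos dt_pos by (intro add_nonneg_nonneg mult_nonneg_nonneg) auto
  show ?thesis unfolding s_def[symmetric]
  proof (rule functional_order2[where L="\<lambda>f. ETA f j n" and U=u0])
    show "ETA (\<lambda>x. f x - (c0 + c1 * (x - s))) j n = ETA f j n" for f c0 c1
      by (rule ETA_inv)
    show "\<bar>ETA f j n\<bar> \<le> MT * B" if "\<And>x. x \<in> {s..s + HT} \<Longrightarrow> \<bar>f x\<bar> \<le> B" for f B
    proof -
      have "\<bar>ETA f j n\<bar> \<le> 2 * B / dx + 2 * B / (c * dt)"
        by (rule ETA_bnd[OF _ j]) (use that in \<open>simp add: s_def HT_def\<close>)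
      also have "\<dots> = MT * B" by (simp add: MT_def algebra_simps)
      finally show ?thesis .
    qed
    show "(FF has_real_derivative u0 x) (at x within {s..s + HT})" if "x \<in> {s..s + HT}" for x
      by (rule dF'[OF that s0])
    show "\<bar>u0 x - u0 s\<bar> \<le> integral {s..s + HT} (\<lambda>t. \<bar>u1 t\<bar>)" if "x \<in> {s..s + HT}" for x
      by (rule window_bound[OF L012(2) rep0' s0 H0 that])
  qed
qed

end

context params begin
definition "hI = real (r + p + 1) / lam + c * real k"
definition "mI = 2 * lam * (Sa + lam * (Sbeta * SA))"
definition "hE = c * real (2 * k + 1)"
definition "mE = (2 / c) * (Sa + Sbeta * (\<bar>inverse Sb\<bar> * Sa))"
definition "mF = 2 * Sa * Sa * \<bar>inverse Sb\<bar> / (lam * c)"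
definition "h0 = c * real (3 * k)"
definition "hT = real r / lam + c"
definition "mT = 2 * lam + 2 / c"
definition "QI = real (r + p + 1) + c * real k * lam"
definition "QT = real r / (lam * c) + 1"

lemma QI_nonneg: "0 \<le> QI" unfolding QI_def using c_pos lam_pos by simp
lemma QT_nonneg: "0 \<le> QT" unfolding QT_def using c_pos lam_pos by simp
end

lemma sq3: "(x + y + z)\<^sup>2 \<le> 3 * (x\<^sup>2 + y\<^sup>2 + (z::real)\<^sup>2)"
proof -
  have "3 * (x\<^sup>2 + y\<^sup>2 + z\<^sup>2) - (x + y + z)\<^sup>2 = (x - y)\<^sup>2 + (y - z)\<^sup>2 + (x - z)\<^sup>2"
    by (simp add: power2_eq_square algebra_simps)
  moreover have "0 \<le> (x - y)\<^sup>2 + (y - z)\<^sup>2 + (x - z)\<^sup>2" by simp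
  ultimately show ?thesis by linarith
qed

lemma sq_le_of_abs_le: "\<bar>x\<bar> \<le> (y::real) \<Longrightarrow> x\<^sup>2 \<le> y\<^sup>2"
  by (metis abs_ge_zero abs_le_square_iff abs_of_nonneg order_trans)

context sh begin

lemma Sa_nn: "0 \<le> Sa" unfolding Sa_def by (simp add: sum_nonneg)
lemma Sbeta_nn: "0 \<le> Sbeta" unfolding Sbeta_def by (simp add: sum_nonneg)
lemma SA_nn: "0 \<le> SA" unfolding SA_def by (simp add: sum_nonneg)

lemma HI_eq: "HI = dt * hI" unfolding HI_def hI_def dx_def using lam_pos by (simp add: field_simps)
lemma HI_QI: "QI * dx = HI" unfolding HI_def QI_def dx_def using lam_pos by (simp add: field_simps)
lemma MI_eq: "MI = mI / dt\<^sup>2" unfolding MI_def mI_def dx_def using lam_pos dt_pos by (simp add: field_simps power2_eq_square)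
lemma HE_eq: "HE = dt * hE" unfolding HE_def hE_def by simp
lemma inv_dtSb: "\<bar>inverse (dt * Sb)\<bar> = \<bar>inverse Sb\<bar> / dt"
  using dt_pos by (simp add: abs_mult field_simps)
lemma ME_eq: "ME = mE / dt\<^sup>2"
  unfolding ME_def mE_def inv_dtSb using lam_dx c_pos dt_pos
  by (simp add: field_simps power2_eq_square)
lemma MF_eq: "MF = mF / dt\<^sup>2"
  unfolding MF_def mF_def inv_dtSb dx_def using lam_pos c_pos dt_pos
  by (simp add: field_simps power2_eq_square)
lemma H0_eq: "H0 = dt * h0" unfolding H0_def h0_def by simp
lemma HT_eq: "HT = dt * hT" unfolding HT_def hT_def dx_def using lam_pos by (simp add: field_simps)
lemma HT_QT: "QT * (c * dt) = HT" unfolding HT_def QT_def dx_def using lam_pos c_pos by (simp add: field_simps)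
lemma MT_eq: "MT = mT / dt" unfolding MT_def mT_def dx_def using lam_pos c_pos dt_pos by (simp add: field_simps)

lemma MI_nn: "0 \<le> MI" unfolding MI_def using dt_pos dx_pos lam_pos Sa_nn Sbeta_nn SA_nn by simp
lemma ME_nn: "0 \<le> ME" unfolding ME_def using dt_pos dx_pos lam_pos c_pos Sa_nn Sbeta_nn by simp
lemma MF_nn: "0 \<le> MF" unfolding MF_def using dt_pos dx_pos c_pos Sa_nn by simp
lemma MT_nn: "0 \<le> MT" unfolding MT_def using dt_pos dx_pos c_pos by simp
lemma HI_nn: "0 \<le> HI" unfolding HI_def using dx_pos c_pos dt_pos by (intro add_nonneg_nonneg mult_nonneg_nonneg) auto
lemma HE_nn: "0 \<le> HE" unfolding HE_def using c_pos dt_pos by (intro mult_nonneg_nonneg) auto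
lemma HT_nn: "0 \<le> HT" unfolding HT_def using dx_pos c_pos dt_pos by (intro add_nonneg_nonneg mult_nonneg_nonneg) auto

lemma sq_est:
  fixes X M H J G :: real
  assumes e: "\<bar>X\<bar> \<le> M * (H\<^sup>2 * J)" and J: "J\<^sup>2 \<le> H * G" and M: "0 \<le> M" and H: "0 \<le> H" and J0: "0 \<le> J"
  shows "X\<^sup>2 \<le> (M * H\<^sup>2)\<^sup>2 * H * G"
proof -
  have "X\<^sup>2 \<le> (M * (H\<^sup>2 * J))\<^sup>2" by (rule sq_le_of_abs_le[OF e])
  also have "\<dots> = (M * H\<^sup>2)\<^sup>2 * J\<^sup>2" by (simp add: power_mult_distrib)
  also have "\<dots> \<le> (M * H\<^sup>2)\<^sup>2 * (H * G)" by (rule mult_left_mono[OF J]) simp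
  finally show ?thesis by (simp add: mult.assoc)
qed

lemma sq_est1:
  fixes X M H J G :: real
  assumes e: "\<bar>X\<bar> \<le> M * (H * J)" and J: "J\<^sup>2 \<le> H * G" and M: "0 \<le> M" and H: "0 \<le> H" and J0: "0 \<le> J"
  shows "X\<^sup>2 \<le> (M * H)\<^sup>2 * H * G"
proof -
  have "X\<^sup>2 \<le> (M * (H * J))\<^sup>2" by (rule sq_le_of_abs_le[OF e])
  also have "\<dots> = (M * H)\<^sup>2 * J\<^sup>2" by (simp add: power_mult_distrib)
  also have "\<dots> \<le> (M * H)\<^sup>2 * (H * G)" by (rule mult_left_mono[OF J]) simp
  finally show ?thesis by (simp add: mult.assoc)
qed

lemma absint_nn: "L2_Rplus g \<Longrightarrow> 0 \<le> s \<Longrightarrow> 0 \<le> integral {s..t} (\<lambda>x. \<bar>g x\<bar>)"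
  by (rule integral_nonneg[OF L2_local_HK(5)]) auto

lemma window_L2: "L2_Rplus g \<Longrightarrow> 0 \<le> s \<Longrightarrow> 0 \<le> H \<Longrightarrow>
    (integral {s..s+H} (\<lambda>x. \<bar>g x\<bar>))\<^sup>2 \<le> H * L2sq g"
proof -
  assume L: "L2_Rplus g" and s: "0 \<le> s" and H: "0 \<le> H"
  have "(integral {s..s+H} (\<lambda>x. \<bar>g x\<bar>))\<^sup>2 \<le> H * integral {s..s+H} (\<lambda>x. (g x)\<^sup>2)"
    by (rule cs_window[OF L s H])
  also have "\<dots> \<le> H * L2sq g" by (rule mult_left_mono[OF L2_local_HK(3)[OF L s]]) (use H in auto)
  finally show ?thesis .
qed

lemma gsum:
  assumes L: "L2_Rplus g" and s0: "0 \<le> s0" and h: "0 < h" and Q: "0 \<le> Q"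
  shows "summable (\<lambda>i. integral {s0 + real i * h .. s0 + real i * h + Q * h} (\<lambda>t. (g t)\<^sup>2))"
    "(\<Sum>i. integral {s0 + real i * h .. s0 + real i * h + Q * h} (\<lambda>t. (g t)\<^sup>2)) \<le> real (nat \<lceil>Q\<rceil>) * L2sq g"
proof -
  have nn: "0 \<le> integral {s0 + real i * h .. s0 + real i * h + Q * h} (\<lambda>t. (g t)\<^sup>2)" for i
    by (rule integral_nonneg[OF L2_local_HK(2)[OF L]]) (use s0 h in auto)
  have ps: "(\<Sum>i<N. integral {s0 + real i * h .. s0 + real i * h + Q * h} (\<lambda>t. (g t)\<^sup>2)) \<le> real (nat \<lceil>Q\<rceil>) * L2sq g" for N
    by (rule overlap_sum[OF _ L2_local_HK(2)[OF L s0] L2_local_HK(3)[OF L s0] h Q]) simp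
  show "summable (\<lambda>i. integral {s0 + real i * h .. s0 + real i * h + Q * h} (\<lambda>t. (g t)\<^sup>2))"
    by (rule summableI_nonneg_bounded[OF nn ps])
  then show "(\<Sum>i. integral {s0 + real i * h .. s0 + real i * h + Q * h} (\<lambda>t. (g t)\<^sup>2)) \<le> real (nat \<lceil>Q\<rceil>) * L2sq g"
    by (rule suminf_le_const[OF _ ps])
qed


lemma sum3:
  fixes g x y :: "nat \<Rightarrow> real"
  assumes "summable g" "summable x" "summable y"
  shows "summable (\<lambda>i. K * (P * g i + Q * x i + R * y i))"
    "(\<Sum>i. K * (P * g i + Q * x i + R * y i)) = K * (P * (\<Sum>i. g i) + Q * (\<Sum>i. x i) + R * (\<Sum>i. y i))"
proof -
  have s1: "summable (\<lambda>i. P * g i)" "summable (\<lambda>i. Q * x i)" "summable (\<lambda>i. R * y i)"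
    using assms by (auto intro: summable_mult)
  have s2: "summable (\<lambda>i. P * g i + Q * x i)" by (rule summable_add[OF s1(1) s1(2)])
  have s3: "summable (\<lambda>i. P * g i + Q * x i + R * y i)" by (rule summable_add[OF s2 s1(3)])
  show "summable (\<lambda>i. K * (P * g i + Q * x i + R * y i))" using s3 by (rule summable_mult)
  have "(\<Sum>i. K * (P * g i + Q * x i + R * y i)) = K * (\<Sum>i. P * g i + Q * x i + R * y i)"
    using s3 by (rule suminf_mult)
  also have "(\<Sum>i. P * g i + Q * x i + R * y i) = (\<Sum>i. P * g i + Q * x i) + (\<Sum>i. R * y i)"
    using suminf_add[OF s2 s1(3)] by simp
  also have "(\<Sum>i. P * g i + Q * x i) = (\<Sum>i. P * g i) + (\<Sum>i. Q * x i)"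
    using suminf_add[OF s1(1) s1(2)] by simp
  finally show "(\<Sum>i. K * (P * g i + Q * x i + R * y i)) = K * (P * (\<Sum>i. g i) + Q * (\<Sum>i. x i) + R * (\<Sum>i. y i))"
    using assms by (simp add: suminf_mult)
qed

lemma M1:
  fixes w wt :: "nat \<Rightarrow> real"
  assumes w_rec: "\<forall>j. (\<Sum>l = - int r..int p. A l * w (nat (int j + l + int r))) = 0"
    and wt_rec: "\<forall>j\<ge>r. (\<Sum>l = - int r..int p. A l * wt (nat (int j + l))) + w j = 0"
    and sw: "summable (\<lambda>i. (w (i + r))\<^sup>2)" and swt: "summable (\<lambda>i. (wt (i + r))\<^sup>2)"
    and n: "2 * k \<le> n"
  shows "summable (\<lambda>i. dxof lam dt * \<bar>eps_err u0 a lam dt k alpha beta w wt r p A (i + r) n\<bar>\<^sup>2)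
    \<and> (\<Sum>i. dxof lam dt * \<bar>eps_err u0 a lam dt k alpha beta w wt r p A (i + r) n\<bar>\<^sup>2)
      \<le> (3 / lam * ((mI * hI\<^sup>2)\<^sup>2 * hI * real (nat \<lceil>QI\<rceil>) + (mE * hE\<^sup>2)\<^sup>2 * hE * (\<Sum>i. (w (i + r))\<^sup>2)
           + (mF * hE\<^sup>2)\<^sup>2 * hE * (\<Sum>i. (wt (i + r))\<^sup>2))) * dt\<^sup>2 * L2sq u2"
proof -
  define m where "m = n - k"
  have km: "k \<le> m" using n by (simp add: m_def)
  have kn: "k \<le> n" using n by simp
  define s0 where "s0 = c * (real m * dt)"
  have s0nn: "0 \<le> s0" unfolding s0_def by (rule cm0)
  define g where "g i = integral {s0 + real i * dx .. s0 + real i * dx + QI * dx} (\<lambda>t. (u2 t)\<^sup>2)" for i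
  define E where "E = EE FF m"
  define Fc where "Fc = FC FF m"
  define L where "L = L2sq u2"
  have L0: "0 \<le> L" unfolding L_def by (rule L2sq_nonneg[OF L012(3)])
  have dec: "eps_err u0 a lam dt k alpha beta w wt r p A (i + r) n
      = RI FF (int (i + r)) m + w (i + r) * E + wt (i + r) * Fc" for i
    unfolding m_def E_def Fc_def by (rule eps_decomp[OF uint utr w_rec wt_rec kn])
  have RIb: "(RI FF (int (i + r)) m)\<^sup>2 \<le> (MI * HI\<^sup>2)\<^sup>2 * HI * g i" for i
  proof -
    have e: "real i * dx + c * (real m * dt) = s0 + real i * dx" by (simp add: s0_def)
    have si: "0 \<le> s0 + real i * dx" using s0nn dx_pos by simp
    show ?thesis
    proof (rule sq_est[OF _ _ MI_nn HI_nn])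
      show "\<bar>RI FF (int (i + r)) m\<bar> \<le> MI * (HI\<^sup>2 * integral {s0 + real i * dx .. s0 + real i * dx + HI} (\<lambda>t. \<bar>u2 t\<bar>))"
        using RI_est[of i m] unfolding e .
      show "(integral {s0 + real i * dx .. s0 + real i * dx + HI} (\<lambda>t. \<bar>u2 t\<bar>))\<^sup>2 \<le> HI * g i"
        unfolding g_def HI_QI by (rule cs_window[OF L012(3) si HI_nn])
      show "0 \<le> integral {s0 + real i * dx .. s0 + real i * dx + HI} (\<lambda>t. \<bar>u2 t\<bar>)"
        by (rule absint_nn[OF L012(3) si])
    qed
  qed
  have Eb: "E\<^sup>2 \<le> (ME * HE\<^sup>2)\<^sup>2 * HE * L"
    unfolding E_def L_def
    by (rule sq_est[OF EE_est[OF km] window_L2[OF L012(3) cm0 HE_nn] ME_nn HE_nn absint_nn[OF L012(3) cm0]])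
  have Fb: "Fc\<^sup>2 \<le> (MF * HE\<^sup>2)\<^sup>2 * HE * L"
    unfolding Fc_def L_def
    by (rule sq_est[OF FC_est[OF km] window_L2[OF L012(3) cm0 HE_nn] MF_nn HE_nn absint_nn[OF L012(3) cm0]])
  have gs: "summable g" "(\<Sum>i. g i) \<le> real (nat \<lceil>QI\<rceil>) * L"
    unfolding g_def L_def using gsum[OF L012(3) s0nn dx_pos QI_nonneg] by auto
  define T where "T i = 3 * dx * ((MI * HI\<^sup>2)\<^sup>2 * HI * g i + E\<^sup>2 * (w (i + r))\<^sup>2 + Fc\<^sup>2 * (wt (i + r))\<^sup>2)" for i
  have Tsum: "summable T" "(\<Sum>i. T i) = 3 * dx * ((MI * HI\<^sup>2)\<^sup>2 * HI * (\<Sum>i. g i) + E\<^sup>2 * (\<Sum>i. (w (i + r))\<^sup>2) + Fc\<^sup>2 * (\<Sum>i. (wt (i + r))\<^sup>2))"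
    unfolding T_def using sum3[OF gs(1) sw swt] by auto
  have dxd: "dxof lam dt = dx" by (simp add: dxof_def dx_def)
  have pt: "norm (dxof lam dt * \<bar>eps_err u0 a lam dt k alpha beta w wt r p A (i + r) n\<bar>\<^sup>2) \<le> T i" for i
  proof -
    have "\<bar>eps_err u0 a lam dt k alpha beta w wt r p A (i + r) n\<bar>\<^sup>2
        = (RI FF (int (i + r)) m + w (i + r) * E + wt (i + r) * Fc)\<^sup>2" by (simp add: dec)
    also have "\<dots> \<le> 3 * ((RI FF (int (i + r)) m)\<^sup>2 + (w (i + r) * E)\<^sup>2 + (wt (i + r) * Fc)\<^sup>2)" by (rule sq3)
    also have "\<dots> \<le> 3 * ((MI * HI\<^sup>2)\<^sup>2 * HI * g i + E\<^sup>2 * (w (i + r))\<^sup>2 + Fc\<^sup>2 * (wt (i + r))\<^sup>2)"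
      using RIb[of i] by (simp add: power_mult_distrib mult.commute)
    finally have "\<bar>eps_err u0 a lam dt k alpha beta w wt r p A (i + r) n\<bar>\<^sup>2 \<le> 3 * ((MI * HI\<^sup>2)\<^sup>2 * HI * g i + E\<^sup>2 * (w (i + r))\<^sup>2 + Fc\<^sup>2 * (wt (i + r))\<^sup>2)" .
    hence "dx * \<bar>eps_err u0 a lam dt k alpha beta w wt r p A (i + r) n\<bar>\<^sup>2 \<le> dx * (3 * ((MI * HI\<^sup>2)\<^sup>2 * HI * g i + E\<^sup>2 * (w (i + r))\<^sup>2 + Fc\<^sup>2 * (wt (i + r))\<^sup>2))"
      using dx_pos by (intro mult_left_mono) auto
    thus ?thesis using dx_pos by (simp add: dxd T_def mult.assoc)
  qed
  have summ: "summable (\<lambda>i. dxof lam dt * \<bar>eps_err u0 a lam dt k alpha beta w wt r p A (i + r) n\<bar>\<^sup>2)"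
    by (rule summable_comparison_test'[OF Tsum(1) pt])
  have "(\<Sum>i. dxof lam dt * \<bar>eps_err u0 a lam dt k alpha beta w wt r p A (i + r) n\<bar>\<^sup>2) \<le> (\<Sum>i. T i)"
    by (rule suminf_le[OF _ summ Tsum(1)]) (metis pt real_norm_def abs_ge_self order_trans)
  also have "\<dots> \<le> 3 * dx * ((MI * HI\<^sup>2)\<^sup>2 * HI * (real (nat \<lceil>QI\<rceil>) * L) + (ME * HE\<^sup>2)\<^sup>2 * HE * L * (\<Sum>i. (w (i + r))\<^sup>2)
        + (MF * HE\<^sup>2)\<^sup>2 * HE * L * (\<Sum>i. (wt (i + r))\<^sup>2))"
  proof -
    have SW0: "0 \<le> (\<Sum>i. (w (i + r))\<^sup>2)" by (rule suminf_nonneg[OF sw]) simp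
    have SWT0: "0 \<le> (\<Sum>i. (wt (i + r))\<^sup>2)" by (rule suminf_nonneg[OF swt]) simp
    have a1: "(MI * HI\<^sup>2)\<^sup>2 * HI * (\<Sum>i. g i) \<le> (MI * HI\<^sup>2)\<^sup>2 * HI * (real (nat \<lceil>QI\<rceil>) * L)"
      by (rule mult_left_mono[OF gs(2)]) (use HI_nn in simp)
    have a2: "E\<^sup>2 * (\<Sum>i. (w (i + r))\<^sup>2) \<le> (ME * HE\<^sup>2)\<^sup>2 * HE * L * (\<Sum>i. (w (i + r))\<^sup>2)"
      by (rule mult_right_mono[OF Eb SW0])
    have a3: "Fc\<^sup>2 * (\<Sum>i. (wt (i + r))\<^sup>2) \<le> (MF * HE\<^sup>2)\<^sup>2 * HE * L * (\<Sum>i. (wt (i + r))\<^sup>2)"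
      by (rule mult_right_mono[OF Fb SWT0])
    have sumle: "(MI * HI\<^sup>2)\<^sup>2 * HI * (\<Sum>i. g i) + E\<^sup>2 * (\<Sum>i. (w (i + r))\<^sup>2) + Fc\<^sup>2 * (\<Sum>i. (wt (i + r))\<^sup>2)
      \<le> (MI * HI\<^sup>2)\<^sup>2 * HI * (real (nat \<lceil>QI\<rceil>) * L) + (ME * HE\<^sup>2)\<^sup>2 * HE * L * (\<Sum>i. (w (i + r))\<^sup>2)
        + (MF * HE\<^sup>2)\<^sup>2 * HE * L * (\<Sum>i. (wt (i + r))\<^sup>2)"
      using a1 a2 a3 by linarith
    show ?thesis unfolding Tsum(2) by (rule mult_left_mono[OF sumle]) (use dx_pos in simp)
  qed
  also have "\<dots> = (3 / lam * ((mI * hI\<^sup>2)\<^sup>2 * hI * real (nat \<lceil>QI\<rceil>) + (mE * hE\<^sup>2)\<^sup>2 * hE * (\<Sum>i. (w (i + r))\<^sup>2)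
           + (mF * hE\<^sup>2)\<^sup>2 * hE * (\<Sum>i. (wt (i + r))\<^sup>2))) * dt\<^sup>2 * L2sq u2"
  proof -
    have i1: "MI * HI\<^sup>2 = mI * hI\<^sup>2" using dt_pos by (simp add: MI_eq HI_eq power_mult_distrib)
    have i2: "ME * HE\<^sup>2 = mE * hE\<^sup>2" using dt_pos by (simp add: ME_eq HE_eq power_mult_distrib)
    have i3: "MF * HE\<^sup>2 = mF * hE\<^sup>2" using dt_pos by (simp add: MF_eq HE_eq power_mult_distrib)
    show ?thesis unfolding i1 i2 i3 unfolding HI_eq HE_eq L_def dx_def
      using lam_pos by (simp add: field_simps power2_eq_square)
  qed
  finally show ?thesis using summ by simp
qed


lemma M2:
  fixes w wt :: "nat \<Rightarrow> real"
  assumes w_rec: "\<forall>j. (\<Sum>l = - int r..int p. A l * w (nat (int j + l + int r))) = 0"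
    and wt_rec: "\<forall>j\<ge>r. (\<Sum>l = - int r..int p. A l * wt (nat (int j + l))) + w j = 0"
    and sw: "summable (\<lambda>i. (w (i + r))\<^sup>2)" and swt: "summable (\<lambda>i. (wt (i + r))\<^sup>2)"
    and kn: "k \<le> n" and nk: "n < 2 * k" and dt1: "dt \<le> 1"
  shows "summable (\<lambda>i. dxof lam dt * \<bar>eps_err u0 a lam dt k alpha beta w wt r p A (i + r) n\<bar>\<^sup>2)
    \<and> (\<Sum>i. dxof lam dt * \<bar>eps_err u0 a lam dt k alpha beta w wt r p A (i + r) n\<bar>\<^sup>2)
      \<le> (3 / lam * ((mI * hI\<^sup>2)\<^sup>2 * hI * real (nat \<lceil>QI\<rceil>) + (mE * h0\<^sup>2)\<^sup>2 * 2 * (\<Sum>i. (w (i + r))\<^sup>2)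
           + (mF * h0\<^sup>2)\<^sup>2 * 2 * (\<Sum>i. (wt (i + r))\<^sup>2))) * dt * (L2sq u1 + L2sq u2)"
proof -
  define m where "m = n - k"
  have km: "m < k" using kn nk by (simp add: m_def)
  define s0 where "s0 = c * (real m * dt)"
  have s0nn: "0 \<le> s0" unfolding s0_def by (rule cm0)
  define g where "g i = integral {s0 + real i * dx .. s0 + real i * dx + QI * dx} (\<lambda>t. (u2 t)\<^sup>2)" for i
  define E where "E = EE FF m"
  define Fc where "Fc = FC FF m"
  define L where "L = L2sq u1 + L2sq u2"
  have L1nn: "0 \<le> L2sq u1" by (rule L2sq_nonneg[OF L012(2)])
  have L2nn: "0 \<le> L2sq u2" by (rule L2sq_nonneg[OF L012(3)])
  have SS2: "SS\<^sup>2 = 2 * L" unfolding SS_def L_def using L1nn L2nn by simp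
  have dec: "eps_err u0 a lam dt k alpha beta w wt r p A (i + r) n
      = RI FF (int (i + r)) m + w (i + r) * E + wt (i + r) * Fc" for i
    unfolding m_def E_def Fc_def by (rule eps_decomp[OF uint utr w_rec wt_rec kn])
  have RIb: "(RI FF (int (i + r)) m)\<^sup>2 \<le> (MI * HI\<^sup>2)\<^sup>2 * HI * g i" for i
  proof -
    have e: "real i * dx + c * (real m * dt) = s0 + real i * dx" by (simp add: s0_def)
    have si: "0 \<le> s0 + real i * dx" using s0nn dx_pos by simp
    show ?thesis
    proof (rule sq_est[OF _ _ MI_nn HI_nn])
      show "\<bar>RI FF (int (i + r)) m\<bar> \<le> MI * (HI\<^sup>2 * integral {s0 + real i * dx .. s0 + real i * dx + HI} (\<lambda>t. \<bar>u2 t\<bar>))"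
        using RI_est[of i m] unfolding e .
      show "(integral {s0 + real i * dx .. s0 + real i * dx + HI} (\<lambda>t. \<bar>u2 t\<bar>))\<^sup>2 \<le> HI * g i"
        unfolding g_def HI_QI by (rule cs_window[OF L012(3) si HI_nn])
      show "0 \<le> integral {s0 + real i * dx .. s0 + real i * dx + HI} (\<lambda>t. \<bar>u2 t\<bar>)"
        by (rule absint_nn[OF L012(3) si])
    qed
  qed
  have Eb: "E\<^sup>2 \<le> (ME * H0\<^sup>2)\<^sup>2 * (2 * L)"
  proof -
    have "E\<^sup>2 \<le> (ME * (H0\<^sup>2 * SS))\<^sup>2" unfolding E_def by (rule sq_le_of_abs_le[OF EE_mid[OF km]])
    thus ?thesis by (simp add: power_mult_distrib SS2 mult.assoc)
  qed
  have Fb: "Fc\<^sup>2 \<le> (MF * H0\<^sup>2)\<^sup>2 * (2 * L)"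
  proof -
    have "Fc\<^sup>2 \<le> (MF * (H0\<^sup>2 * SS))\<^sup>2" unfolding Fc_def by (rule sq_le_of_abs_le[OF FC_mid[OF km]])
    thus ?thesis by (simp add: power_mult_distrib SS2 mult.assoc)
  qed
  have gs: "summable g" "(\<Sum>i. g i) \<le> real (nat \<lceil>QI\<rceil>) * L2sq u2"
    unfolding g_def using gsum[OF L012(3) s0nn dx_pos QI_nonneg] by auto
  define T where "T i = 3 * dx * ((MI * HI\<^sup>2)\<^sup>2 * HI * g i + E\<^sup>2 * (w (i + r))\<^sup>2 + Fc\<^sup>2 * (wt (i + r))\<^sup>2)" for i
  have Tsum: "summable T" "(\<Sum>i. T i) = 3 * dx * ((MI * HI\<^sup>2)\<^sup>2 * HI * (\<Sum>i. g i) + E\<^sup>2 * (\<Sum>i. (w (i + r))\<^sup>2) + Fc\<^sup>2 * (\<Sum>i. (wt (i + r))\<^sup>2))"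
    unfolding T_def using sum3[OF gs(1) sw swt] by auto
  have dxd: "dxof lam dt = dx" by (simp add: dxof_def dx_def)
  have pt: "norm (dxof lam dt * \<bar>eps_err u0 a lam dt k alpha beta w wt r p A (i + r) n\<bar>\<^sup>2) \<le> T i" for i
  proof -
    have "\<bar>eps_err u0 a lam dt k alpha beta w wt r p A (i + r) n\<bar>\<^sup>2
        = (RI FF (int (i + r)) m + w (i + r) * E + wt (i + r) * Fc)\<^sup>2" by (simp add: dec)
    also have "\<dots> \<le> 3 * ((RI FF (int (i + r)) m)\<^sup>2 + (w (i + r) * E)\<^sup>2 + (wt (i + r) * Fc)\<^sup>2)" by (rule sq3)
    also have "\<dots> \<le> 3 * ((MI * HI\<^sup>2)\<^sup>2 * HI * g i + E\<^sup>2 * (w (i + r))\<^sup>2 + Fc\<^sup>2 * (wt (i + r))\<^sup>2)"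
      using RIb[of i] by (simp add: power_mult_distrib mult.commute)
    finally have "\<bar>eps_err u0 a lam dt k alpha beta w wt r p A (i + r) n\<bar>\<^sup>2 \<le> 3 * ((MI * HI\<^sup>2)\<^sup>2 * HI * g i + E\<^sup>2 * (w (i + r))\<^sup>2 + Fc\<^sup>2 * (wt (i + r))\<^sup>2)" .
    hence "dx * \<bar>eps_err u0 a lam dt k alpha beta w wt r p A (i + r) n\<bar>\<^sup>2 \<le> dx * (3 * ((MI * HI\<^sup>2)\<^sup>2 * HI * g i + E\<^sup>2 * (w (i + r))\<^sup>2 + Fc\<^sup>2 * (wt (i + r))\<^sup>2))"
      using dx_pos by (intro mult_left_mono) auto
    thus ?thesis using dx_pos by (simp add: dxd T_def mult.assoc)
  qed
  have summ: "summable (\<lambda>i. dxof lam dt * \<bar>eps_err u0 a lam dt k alpha beta w wt r p A (i + r) n\<bar>\<^sup>2)"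
    by (rule summable_comparison_test'[OF Tsum(1) pt])
  have "(\<Sum>i. dxof lam dt * \<bar>eps_err u0 a lam dt k alpha beta w wt r p A (i + r) n\<bar>\<^sup>2) \<le> (\<Sum>i. T i)"
    by (rule suminf_le[OF _ summ Tsum(1)]) (metis pt real_norm_def abs_ge_self order_trans)
  also have "\<dots> \<le> 3 * dx * ((mI * hI\<^sup>2)\<^sup>2 * hI * real (nat \<lceil>QI\<rceil>) * L + (mE * h0\<^sup>2)\<^sup>2 * 2 * L * (\<Sum>i. (w (i + r))\<^sup>2)
        + (mF * h0\<^sup>2)\<^sup>2 * 2 * L * (\<Sum>i. (wt (i + r))\<^sup>2))"
  proof -
    have SW0: "0 \<le> (\<Sum>i. (w (i + r))\<^sup>2)" by (rule suminf_nonneg[OF sw]) simp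
    have SWT0: "0 \<le> (\<Sum>i. (wt (i + r))\<^sup>2)" by (rule suminf_nonneg[OF swt]) simp
    have i1: "MI * HI\<^sup>2 = mI * hI\<^sup>2" using dt_pos by (simp add: MI_eq HI_eq power_mult_distrib)
    have i2: "ME * H0\<^sup>2 = mE * h0\<^sup>2" using dt_pos by (simp add: ME_eq H0_eq power_mult_distrib)
    have i3: "MF * H0\<^sup>2 = mF * h0\<^sup>2" using dt_pos by (simp add: MF_eq H0_eq power_mult_distrib)
    have hInn: "0 \<le> hI" unfolding hI_def using lam_pos c_pos by simp
    have a1: "(MI * HI\<^sup>2)\<^sup>2 * HI * (\<Sum>i. g i) \<le> (mI * hI\<^sup>2)\<^sup>2 * hI * real (nat \<lceil>QI\<rceil>) * L"
    proof -
      have "(MI * HI\<^sup>2)\<^sup>2 * HI * (\<Sum>i. g i) \<le> (MI * HI\<^sup>2)\<^sup>2 * HI * (real (nat \<lceil>QI\<rceil>) * L2sq u2)"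
        by (rule mult_left_mono[OF gs(2)]) (use HI_nn in simp)
      also have "\<dots> = (mI * hI\<^sup>2)\<^sup>2 * (dt * hI) * (real (nat \<lceil>QI\<rceil>) * L2sq u2)" unfolding i1 unfolding HI_eq ..
      also have "\<dots> \<le> (mI * hI\<^sup>2)\<^sup>2 * hI * (real (nat \<lceil>QI\<rceil>) * L)"
      proof -
        have "dt * hI * (real (nat \<lceil>QI\<rceil>) * L2sq u2) \<le> hI * (real (nat \<lceil>QI\<rceil>) * L)"
        proof -
          have "dt * hI \<le> hI" using mult_right_mono[OF dt1 hInn] by simp
          moreover have "real (nat \<lceil>QI\<rceil>) * L2sq u2 \<le> real (nat \<lceil>QI\<rceil>) * L" unfolding L_def using L1nn by (simp add: mult_left_mono)
          ultimately show ?thesis using hInn L2nn dt_pos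
            by (meson mult_mono mult_nonneg_nonneg of_nat_0_le_iff dual_order.trans less_imp_le order.refl)
        qed
        thus ?thesis by (simp add: mult.assoc mult_left_mono)
      qed
      finally show ?thesis by (simp add: mult.assoc)
    qed
    have a2: "E\<^sup>2 * (\<Sum>i. (w (i + r))\<^sup>2) \<le> (mE * h0\<^sup>2)\<^sup>2 * 2 * L * (\<Sum>i. (w (i + r))\<^sup>2)"
      using mult_right_mono[OF Eb SW0] unfolding i2 by (simp add: mult.assoc)
    have a3: "Fc\<^sup>2 * (\<Sum>i. (wt (i + r))\<^sup>2) \<le> (mF * h0\<^sup>2)\<^sup>2 * 2 * L * (\<Sum>i. (wt (i + r))\<^sup>2)"
      using mult_right_mono[OF Fb SWT0] unfolding i3 by (simp add: mult.assoc)
    have sumle: "(MI * HI\<^sup>2)\<^sup>2 * HI * (\<Sum>i. g i) + E\<^sup>2 * (\<Sum>i. (w (i + r))\<^sup>2) + Fc\<^sup>2 * (\<Sum>i. (wt (i + r))\<^sup>2)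
      \<le> (mI * hI\<^sup>2)\<^sup>2 * hI * real (nat \<lceil>QI\<rceil>) * L + (mE * h0\<^sup>2)\<^sup>2 * 2 * L * (\<Sum>i. (w (i + r))\<^sup>2)
        + (mF * h0\<^sup>2)\<^sup>2 * 2 * L * (\<Sum>i. (wt (i + r))\<^sup>2)"
      using a1 a2 a3 by linarith
    show ?thesis unfolding Tsum(2) by (rule mult_left_mono[OF sumle]) (use dx_pos in simp)
  qed
  also have "\<dots> = (3 / lam * ((mI * hI\<^sup>2)\<^sup>2 * hI * real (nat \<lceil>QI\<rceil>) + (mE * h0\<^sup>2)\<^sup>2 * 2 * (\<Sum>i. (w (i + r))\<^sup>2)
           + (mF * h0\<^sup>2)\<^sup>2 * 2 * (\<Sum>i. (wt (i + r))\<^sup>2))) * dt * (L2sq u1 + L2sq u2)"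
    unfolding L_def dx_def using lam_pos by (simp add: field_simps)
  finally show ?thesis using summ by simp
qed

lemma M3:
  fixes w wt :: "nat \<Rightarrow> real"
  assumes w_init: "\<forall>j<r. w j = -1" and wt_init: "\<forall>j<r. wt j = 0"
  shows "summable (\<lambda>i. \<Sum>j<r. dt * \<bar>eta_err u0 a lam dt k alpha beta w wt j (i + k)\<bar>\<^sup>2)
    \<and> (\<Sum>i. \<Sum>j<r. dt * \<bar>eta_err u0 a lam dt k alpha beta w wt j (i + k)\<bar>\<^sup>2)
      \<le> (real r * (mT * hT)\<^sup>2 * hT * real (nat \<lceil>QT\<rceil>)) * dt\<^sup>2 * L2sq u1"
proof -
  define s0 where "s0 = c * (real k * dt)"
  have s0nn: "0 \<le> s0" unfolding s0_def by (rule cm0)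
  define G where "G i = integral {s0 + real i * (c * dt) .. s0 + real i * (c * dt) + QT * (c * dt)} (\<lambda>t. (u1 t)\<^sup>2)" for i
  have eta: "eta_err u0 a lam dt k alpha beta w wt j (i + k) = ETA FF j (i + k)" if "j < r" for i j
    using that w_init wt_init
    by (simp add: eta_err_def u_app_def u_bl0_def u_bl1_def uint utr ETA_def)
  have win: "c * (real (i + k) * dt) = s0 + real i * (c * dt)" for i by (simp add: s0_def algebra_simps)
  have Eb: "(ETA FF j (i + k))\<^sup>2 \<le> (MT * HT)\<^sup>2 * HT * G i" if "j < r" for i j
  proof -
    have si: "0 \<le> s0 + real i * (c * dt)" using s0nn cdt_pos by simp
    show ?thesis
    proof (rule sq_est1[OF _ _ MT_nn HT_nn])
      show "\<bar>ETA FF j (i + k)\<bar> \<le> MT * (HT * integral {s0 + real i * (c * dt) .. s0 + real i * (c * dt) + HT} (\<lambda>t. \<bar>u1 t\<bar>))"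
        using ETA_est[OF that, of "i + k"] unfolding win .
      show "(integral {s0 + real i * (c * dt) .. s0 + real i * (c * dt) + HT} (\<lambda>t. \<bar>u1 t\<bar>))\<^sup>2 \<le> HT * G i"
        unfolding G_def HT_QT by (rule cs_window[OF L012(2) si HT_nn])
      show "0 \<le> integral {s0 + real i * (c * dt) .. s0 + real i * (c * dt) + HT} (\<lambda>t. \<bar>u1 t\<bar>)"
        by (rule absint_nn[OF L012(2) si])
    qed
  qed
  have gs: "summable G" "(\<Sum>i. G i) \<le> real (nat \<lceil>QT\<rceil>) * L2sq u1"
    unfolding G_def using gsum[OF L012(2) s0nn cdt_pos QT_nonneg] by auto
  define T where "T i = (real r * dt * ((MT * HT)\<^sup>2 * HT)) * G i" for i
  have Ts: "summable T" unfolding T_def by (rule summable_mult[OF gs(1)])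
  have pt: "norm (\<Sum>j<r. dt * \<bar>eta_err u0 a lam dt k alpha beta w wt j (i + k)\<bar>\<^sup>2) \<le> T i" for i
  proof -
    have "(\<Sum>j<r. dt * \<bar>eta_err u0 a lam dt k alpha beta w wt j (i + k)\<bar>\<^sup>2) \<le> (\<Sum>j<r. dt * ((MT * HT)\<^sup>2 * HT * G i))"
    proof (rule sum_mono)
      fix j assume j: "j \<in> {..<r}"
      have "\<bar>eta_err u0 a lam dt k alpha beta w wt j (i + k)\<bar>\<^sup>2 = (ETA FF j (i + k))\<^sup>2" using eta[of j i] j by simp
      thus "dt * \<bar>eta_err u0 a lam dt k alpha beta w wt j (i + k)\<bar>\<^sup>2 \<le> dt * ((MT * HT)\<^sup>2 * HT * G i)"
        using mult_left_mono[OF Eb[of j i], of dt] j dt_pos by simp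
    qed
    also have "\<dots> = T i" by (simp add: T_def algebra_simps)
    finally show ?thesis using dt_pos by (simp add: sum_nonneg)
  qed
  have summ: "summable (\<lambda>i. \<Sum>j<r. dt * \<bar>eta_err u0 a lam dt k alpha beta w wt j (i + k)\<bar>\<^sup>2)"
    by (rule summable_comparison_test'[OF Ts pt])
  have "(\<Sum>i. \<Sum>j<r. dt * \<bar>eta_err u0 a lam dt k alpha beta w wt j (i + k)\<bar>\<^sup>2) \<le> (\<Sum>i. T i)"
    by (rule suminf_le[OF _ summ Ts]) (metis pt real_norm_def abs_ge_self order_trans)
  also have "(\<Sum>i. T i) = (real r * dt * ((MT * HT)\<^sup>2 * HT)) * (\<Sum>i. G i)"
    unfolding T_def by (rule suminf_mult[OF gs(1)])
  also have "\<dots> \<le> (real r * dt * ((MT * HT)\<^sup>2 * HT)) * (real (nat \<lceil>QT\<rceil>) * L2sq u1)"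
    by (rule mult_left_mono[OF gs(2)]) (use dt_pos HT_nn in simp)
  also have "\<dots> = (real r * (mT * hT)\<^sup>2 * hT * real (nat \<lceil>QT\<rceil>)) * dt\<^sup>2 * L2sq u1"
  proof -
    have i1: "MT * HT = mT * hT" using dt_pos by (simp add: MT_eq HT_eq)
    show ?thesis unfolding i1 unfolding HT_eq by (simp add: power2_eq_square algebra_simps)
  qed
  finally show ?thesis using summ by simp
qed

end

theorem proposition3p2:
  fixes a lam :: real and r p k :: nat and A :: "int \<Rightarrow> real"
    and alpha beta :: "nat \<Rightarrow> real" and w wt :: "nat \<Rightarrow> real"
  assumes a_neg: "a < 0"
    and A_ends: "A (- int r) \<noteq> 0" "A (int p) \<noteq> 0"
    and k_pos: "k \<ge> 1"
    and alpha_k: "alpha k = 1"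
    and ab0: "\<bar>alpha 0\<bar> + \<bar>beta 0\<bar> > 0"
    and lam_pos: "lam > 0"
    and A1: "(\<Sum>l = - int r..int p. A l) = 0" "(\<Sum>l = - int r..int p. of_int l * A l) = a"
    and A2: "(\<Sum>\<sigma>\<le>k. alpha \<sigma>) = 0" "(\<Sum>\<sigma>\<le>k. real \<sigma> * alpha \<sigma>) = (\<Sum>\<sigma><k. beta \<sigma>)"
    and A3: "stability_A3 lam r p A k alpha beta"
    and A4: "\<forall>\<theta>\<in>{-pi..pi} - {0}. (\<Sum>l = - int r..int p. complex_of_real (A l) * cis \<theta> powi l) \<noteq> 0"
    and w_init: "\<forall>j<r. w j = -1"
    and w_rec: "\<forall>j. (\<Sum>l = - int r..int p. A l * w (nat (int j + l + int r))) = 0"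
    and w_lim: "w \<longlonglongrightarrow> 0"
    and wt_rec: "\<forall>j\<ge>r. (\<Sum>l = - int r..int p. A l * wt (nat (int j + l))) + w j = 0"
    and wt_init: "\<forall>j<r. wt j = 0"
    and wt_lim: "wt \<longlonglongrightarrow> 0"
  shows "\<exists>C>0. \<forall>u0 u1 u2. H2_Rplus u0 u1 u2 \<and> u0 0 = 0 \<longrightarrow>
     (\<forall>dt. 0 < dt \<and> dt \<le> 1 \<longrightarrow>
        (\<forall>n\<ge>2 * k.
           summable (\<lambda>i. dxof lam dt * \<bar>eps_err u0 a lam dt k alpha beta w wt r p A (i + r) n\<bar>\<^sup>2)
         \<and> (\<Sum>i. dxof lam dt * \<bar>eps_err u0 a lam dt k alpha beta w wt r p A (i + r) n\<bar>\<^sup>2)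
             \<le> C * dt\<^sup>2 * L2sq u2)
      \<and> (\<forall>n. k \<le> n \<and> n \<le> 2 * k - 1 \<longrightarrow>
           summable (\<lambda>i. dxof lam dt * \<bar>eps_err u0 a lam dt k alpha beta w wt r p A (i + r) n\<bar>\<^sup>2)
         \<and> (\<Sum>i. dxof lam dt * \<bar>eps_err u0 a lam dt k alpha beta w wt r p A (i + r) n\<bar>\<^sup>2)
             \<le> C * dt * (L2sq u1 + L2sq u2))
      \<and> summable (\<lambda>i. \<Sum>j<r. dt * \<bar>eta_err u0 a lam dt k alpha beta w wt j (i + k)\<bar>\<^sup>2)
      \<and> (\<Sum>i. \<Sum>j<r. dt * \<bar>eta_err u0 a lam dt k alpha beta w wt j (i + k)\<bar>\<^sup>2)
             \<le> C * dt\<^sup>2 * L2sq u1)"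
proof -
  interpret P: params a lam r p k A alpha beta
    using a_neg lam_pos A1 A2 by unfold_locales auto
  have rgw: "rgeo w"
    by (rule rgeo_rec[where A=A and p=p and r=r and y=w and z="\<lambda>_. 0", OF A_ends(2)]) (use w_rec rgeo_zero w_lim in auto)
  have rgwt: "rgeo wt"
  proof (rule rgeo_rec[where A=A and p=p and r=r and y=wt and z="\<lambda>j. (-1) * w (j + r)", OF A_ends(2)])
    show "(\<Sum>l = - int r..int p. A l * wt (nat (int j + l + int r))) = -1 * w (j + r)" for j
    proof -
      have "(\<Sum>l = - int r..int p. A l * wt (nat (int (j + r) + l))) + w (j + r) = 0"
        using wt_rec[rule_format, of "j + r"] by (simp only: le_add2)
      moreover have "(\<Sum>l = - int r..int p. A l * wt (nat (int (j + r) + l))) = (\<Sum>l = - int r..int p. A l * wt (nat (int j + l + int r)))"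
        by (rule sum.cong) (auto simp: algebra_simps)
      ultimately have "(\<Sum>l = - int r..int p. A l * wt (nat (int j + l + int r))) + w (j + r) = 0" by linarith
      thus ?thesis by (simp add: eq_neg_iff_add_eq_0)
    qed
    show "rgeo (\<lambda>j. (-1) * w (j + r))" by (rule rgeo_shift[OF rgw])
    show "wt \<longlonglongrightarrow> 0" by (rule wt_lim)
  qed
  have sw: "summable (\<lambda>i. (w (i + r))\<^sup>2)"
    using rgeo_summable_sq[OF rgeo_shift[OF rgw, of 1 r]] by simp
  have swt: "summable (\<lambda>i. (wt (i + r))\<^sup>2)"
    using rgeo_summable_sq[OF rgeo_shift[OF rgwt, of 1 r]] by simp
  define SW where "SW = (\<Sum>i. (w (i + r))\<^sup>2)"
  define SWT where "SWT = (\<Sum>i. (wt (i + r))\<^sup>2)"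
  have SW0: "0 \<le> SW" unfolding SW_def by (rule suminf_nonneg[OF sw]) simp
  have SWT0: "0 \<le> SWT" unfolding SWT_def by (rule suminf_nonneg[OF swt]) simp
  have cp: "0 < P.c" by (rule P.c_pos)
  have hI0: "0 \<le> P.hI" unfolding P.hI_def using lam_pos cp by simp
  have hE0: "0 \<le> P.hE" unfolding P.hE_def using cp by simp
  have hT0: "0 \<le> P.hT" unfolding P.hT_def using lam_pos cp by simp
  define K1 where "K1 = 3 / lam * ((P.mI * P.hI\<^sup>2)\<^sup>2 * P.hI * real (nat \<lceil>P.QI\<rceil>) + (P.mE * P.hE\<^sup>2)\<^sup>2 * P.hE * SW
           + (P.mF * P.hE\<^sup>2)\<^sup>2 * P.hE * SWT)"
  define K2 where "K2 = 3 / lam * ((P.mI * P.hI\<^sup>2)\<^sup>2 * P.hI * real (nat \<lceil>P.QI\<rceil>) + (P.mE * P.h0\<^sup>2)\<^sup>2 * 2 * SW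
           + (P.mF * P.h0\<^sup>2)\<^sup>2 * 2 * SWT)"
  define K3 where "K3 = real r * (P.mT * P.hT)\<^sup>2 * P.hT * real (nat \<lceil>P.QT\<rceil>)"
  have K10: "0 \<le> K1" unfolding K1_def using lam_pos hI0 hE0 SW0 SWT0
    by (intro mult_nonneg_nonneg add_nonneg_nonneg) auto
  have K20: "0 \<le> K2" unfolding K2_def using lam_pos hI0 SW0 SWT0
    by (intro mult_nonneg_nonneg add_nonneg_nonneg) auto
  have K30: "0 \<le> K3" unfolding K3_def using hT0 by (intro mult_nonneg_nonneg) auto
  define C where "C = K1 + K2 + K3 + 1"
  have C0: "C > 0" unfolding C_def using K10 K20 K30 by simp
  show ?thesis
  proof (rule exI[of _ C], rule conjI[OF C0], intro allI impI)
    fix u0 u1 u2 :: "real \<Rightarrow> real" and dt :: real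
    assume H: "H2_Rplus u0 u1 u2 \<and> u0 0 = 0" and dt: "0 < dt \<and> dt \<le> 1"
    interpret S: sh a lam r p k A alpha beta dt u0 u1 u2
      using H dt by unfold_locales auto
    have L1: "0 \<le> L2sq u1" by (rule S.L2sq_nonneg[OF S.L012(2)])
    have L2: "0 \<le> L2sq u2" by (rule S.L2sq_nonneg[OF S.L012(3)])
    have dt2: "0 \<le> dt\<^sup>2" by simp
    have g1: "\<forall>n\<ge>2 * k.
           summable (\<lambda>i. dxof lam dt * \<bar>eps_err u0 a lam dt k alpha beta w wt r p A (i + r) n\<bar>\<^sup>2)
         \<and> (\<Sum>i. dxof lam dt * \<bar>eps_err u0 a lam dt k alpha beta w wt r p A (i + r) n\<bar>\<^sup>2)
             \<le> C * dt\<^sup>2 * L2sq u2"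
    proof (intro allI impI)
      fix n assume n: "2 * k \<le> n"
      from S.M1[OF w_rec wt_rec sw swt n]
      have m1: "summable (\<lambda>i. dxof lam dt * \<bar>eps_err u0 a lam dt k alpha beta w wt r p A (i + r) n\<bar>\<^sup>2)"
        "(\<Sum>i. dxof lam dt * \<bar>eps_err u0 a lam dt k alpha beta w wt r p A (i + r) n\<bar>\<^sup>2) \<le> K1 * dt\<^sup>2 * L2sq u2"
        unfolding K1_def SW_def SWT_def by auto
      have "K1 * dt\<^sup>2 * L2sq u2 \<le> C * dt\<^sup>2 * L2sq u2"
        using K20 K30 dt2 L2 by (intro mult_right_mono) (auto simp: C_def)
      with m1 show "summable (\<lambda>i. dxof lam dt * \<bar>eps_err u0 a lam dt k alpha beta w wt r p A (i + r) n\<bar>\<^sup>2)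
         \<and> (\<Sum>i. dxof lam dt * \<bar>eps_err u0 a lam dt k alpha beta w wt r p A (i + r) n\<bar>\<^sup>2)
             \<le> C * dt\<^sup>2 * L2sq u2" by linarith
    qed
    have g2: "\<forall>n. k \<le> n \<and> n \<le> 2 * k - 1 \<longrightarrow>
           summable (\<lambda>i. dxof lam dt * \<bar>eps_err u0 a lam dt k alpha beta w wt r p A (i + r) n\<bar>\<^sup>2)
         \<and> (\<Sum>i. dxof lam dt * \<bar>eps_err u0 a lam dt k alpha beta w wt r p A (i + r) n\<bar>\<^sup>2)
             \<le> C * dt * (L2sq u1 + L2sq u2)"
    proof (intro allI impI)
      fix n assume n: "k \<le> n \<and> n \<le> 2 * k - 1"
      have nk: "n < 2 * k" using n k_pos by linarith
      from S.M2[OF w_rec wt_rec sw swt conjunct1[OF n] nk conjunct2[OF dt]]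
      have m2: "summable (\<lambda>i. dxof lam dt * \<bar>eps_err u0 a lam dt k alpha beta w wt r p A (i + r) n\<bar>\<^sup>2)"
        "(\<Sum>i. dxof lam dt * \<bar>eps_err u0 a lam dt k alpha beta w wt r p A (i + r) n\<bar>\<^sup>2) \<le> K2 * dt * (L2sq u1 + L2sq u2)"
        unfolding K2_def SW_def SWT_def by auto
      have "K2 * dt * (L2sq u1 + L2sq u2) \<le> C * dt * (L2sq u1 + L2sq u2)"
        using K10 K30 dt L1 L2 by (intro mult_right_mono) (auto simp: C_def)
      with m2 show "summable (\<lambda>i. dxof lam dt * \<bar>eps_err u0 a lam dt k alpha beta w wt r p A (i + r) n\<bar>\<^sup>2)
         \<and> (\<Sum>i. dxof lam dt * \<bar>eps_err u0 a lam dt k alpha beta w wt r p A (i + r) n\<bar>\<^sup>2)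
             \<le> C * dt * (L2sq u1 + L2sq u2)" by linarith
    qed
    from S.M3[OF w_init wt_init]
    have m3: "summable (\<lambda>i. \<Sum>j<r. dt * \<bar>eta_err u0 a lam dt k alpha beta w wt j (i + k)\<bar>\<^sup>2)"
      "(\<Sum>i. \<Sum>j<r. dt * \<bar>eta_err u0 a lam dt k alpha beta w wt j (i + k)\<bar>\<^sup>2) \<le> K3 * dt\<^sup>2 * L2sq u1"
      unfolding K3_def by auto

    have "K3 * dt\<^sup>2 * L2sq u1 \<le> C * dt\<^sup>2 * L2sq u1"
      using K10 K20 dt2 L1 by (intro mult_right_mono) (auto simp: C_def)
    with m3(2) have g4: "(\<Sum>i. \<Sum>j<r. dt * \<bar>eta_err u0 a lam dt k alpha beta w wt j (i + k)\<bar>\<^sup>2) \<le> C * dt\<^sup>2 * L2sq u1"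
      by linarith
    show "(\<forall>n\<ge>2 * k.
           summable (\<lambda>i. dxof lam dt * \<bar>eps_err u0 a lam dt k alpha beta w wt r p A (i + r) n\<bar>\<^sup>2)
         \<and> (\<Sum>i. dxof lam dt * \<bar>eps_err u0 a lam dt k alpha beta w wt r p A (i + r) n\<bar>\<^sup>2)
             \<le> C * dt\<^sup>2 * L2sq u2)
      \<and> (\<forall>n. k \<le> n \<and> n \<le> 2 * k - 1 \<longrightarrow>
           summable (\<lambda>i. dxof lam dt * \<bar>eps_err u0 a lam dt k alpha beta w wt r p A (i + r) n\<bar>\<^sup>2)
         \<and> (\<Sum>i. dxof lam dt * \<bar>eps_err u0 a lam dt k alpha beta w wt r p A (i + r) n\<bar>\<^sup>2)
             \<le> C * dt * (L2sq u1 + L2sq u2))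
      \<and> summable (\<lambda>i. \<Sum>j<r. dt * \<bar>eta_err u0 a lam dt k alpha beta w wt j (i + k)\<bar>\<^sup>2)
      \<and> (\<Sum>i. \<Sum>j<r. dt * \<bar>eta_err u0 a lam dt k alpha beta w wt j (i + k)\<bar>\<^sup>2)
             \<le> C * dt\<^sup>2 * L2sq u1"
      using g1 g2 m3(1) g4 by blast
  qed
qed


end
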